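(* Let ${\sf S}_3(n,\ell)$ denote the number of $3$-noncrossing RNA structures on $\{1,\dots,n\}$ with exactly $\ell$ isolated vertices, where $0\le \ell\le n$. Then $$ {\sf S}_3(n,\ell)=\sum_{b=0}^{\lfloor (n-\ell)/2\rfloor}(-1)^b\binom{n-b}{b}\binom{n-2b}{\ell}\left[C_{\frac{n-\ell-2b}{2}}\,C_{\frac{n-\ell-2b}{2}+2}-C_{\frac{n-\ell-2b}{2}+1}^2\right], $$ where $C_m=\frac{1}{m+1}\binom{2m}{m}$ is the $m$-th Catalan number for nonnegative integers $m$, and $C_x:=0$ when $x$ is not an integer.
   Context: A digraph on $\{1,\dots,n\}$ is a set of arcs $(i,j)$ with $1\le i<j\le n$. A $3$-noncrossing digraph is one in which every vertex lies in at most one arc and there are no three arcs $(i_1,j_1),(i_2,j_2),(i_3,j_3)$ with $i_1<i_2<i_3<j_1<j_2<j_3$. A vertex is isolated if it lies in no arc. A $3$-noncrossing RNA structure is a $3$-noncrossing digraph with no arc of the form $(i,i+1)$. *)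

theory Defs
  imports Main
begin

definition digraph_on :: "nat \<Rightarrow> (nat \<times> nat) set \<Rightarrow> bool" where
  "digraph_on n A \<longleftrightarrow> (\<forall>(i,j)\<in>A. 1 \<le> i \<and> i < j \<and> j \<le> n)"

definition in_arc :: "nat \<Rightarrow> nat \<times> nat \<Rightarrow> bool" where
  "in_arc v a \<longleftrightarrow> v = fst a \<or> v = snd a"

definition three_noncrossing :: "nat \<Rightarrow> (nat \<times> nat) set \<Rightarrow> bool" where
  "three_noncrossing n A \<longleftrightarrow> digraph_on n A
     \<and> (\<forall>v. \<forall>a\<in>A. \<forall>b\<in>A. in_arc v a \<and> in_arc v b \<longrightarrow> a = b)
     \<and> \<not> (\<exists>i1 j1 i2 j2 i3 j3. (i1,j1)\<in>A \<and> (i2,j2)\<in>A \<and> (i3,j3)\<in>A \<and>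
            i1 < i2 \<and> i2 < i3 \<and> i3 < j1 \<and> j1 < j2 \<and> j2 < j3)"

definition rna3 :: "nat \<Rightarrow> (nat \<times> nat) set \<Rightarrow> bool" where
  "rna3 n A \<longleftrightarrow> three_noncrossing n A \<and> (\<forall>i. (i, Suc i) \<notin> A)"

definition isolated_vertices :: "nat \<Rightarrow> (nat \<times> nat) set \<Rightarrow> nat set" where
  "isolated_vertices n A = {v \<in> {1..n}. \<not> (\<exists>a\<in>A. in_arc v a)}"

definition S3 :: "nat \<Rightarrow> nat \<Rightarrow> nat" where
  "S3 n l = card {A. rna3 n A \<and> card (isolated_vertices n A) = l}"

definition catalan :: "nat \<Rightarrow> nat" where
  "catalan m = (2*m choose m) div (m + 1)"

definition catalan_half :: "nat \<Rightarrow> int" where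
  "catalan_half k = (if even k then int (catalan (k div 2)) else 0)"

end

theory Submission
  imports Defs Complex_Main
begin

fun Pw :: "nat \<Rightarrow> int \<Rightarrow> int" where
  "Pw 0 d = (if d = 0 then 1 else 0)"
| "Pw (Suc K) d = Pw K (d - 1) + Pw K (d + 1)"

lemma Pw_neg: "Pw K (- d) = Pw K d"
proof (induction K arbitrary: d)
  case 0 then show ?case by simp
next
  case (Suc K)
  have "Pw (Suc K) (- d) = Pw K (- d - 1) + Pw K (- d + 1)" by simp
  also have "\<dots> = Pw K (- (d + 1)) + Pw K (- (d - 1))"
    by (rule arg_cong2[where f="(+)"]; rule arg_cong[where f="Pw K"]; simp)
  also have "\<dots> = Pw K (d + 1) + Pw K (d - 1)" by (simp only: Suc.IH)
  finally show ?case by simp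
qed

lemma Pw_big: "\<bar>d\<bar> > int K \<Longrightarrow> Pw K d = 0"
  by (induction K arbitrary: d) auto

lemma Pw_odd: "odd (int K + d) \<Longrightarrow> Pw K d = 0"
  by (induction K arbitrary: d) auto

lemma Pw_binom: "Pw K (int K - 2 * int j) = int (K choose j)"
proof (induction K arbitrary: j)
  case 0 then show ?case by simp
next
  case (Suc K)
  show ?case
  proof (cases j)
    case 0
    have "Pw K (int K + 2) = 0" by (rule Pw_big) simp
    then show ?thesis using Suc.IH[of 0] 0 by (simp add: algebra_simps)
  next
    case (Suc i)
    have e1: "int (Suc K) - 2 * int j - 1 = int K - 2 * int j" using Suc by simp
    have e2: "int (Suc K) - 2 * int j + 1 = int K - 2 * int i" using Suc by simp
    have "Pw (Suc K) (int (Suc K) - 2 * int j) = Pw K (int K - 2 * int j) + Pw K (int K - 2 * int i)"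
      by (simp only: Pw.simps e1 e2)
    also have "\<dots> = int (K choose j) + int (K choose i)" using Suc.IH[of j] Suc.IH[of i] by simp
    finally show ?thesis using Suc by simp
  qed
qed

definition U :: "nat \<Rightarrow> int \<Rightarrow> int \<Rightarrow> int" where
  "U K x y = Pw K (x + y) * Pw K (x - y)"

lemma U_Suc: "U (Suc K) x y = U K (x + 1) y + U K (x - 1) y + U K x (y + 1) + U K x (y - 1)"
  unfolding U_def by (simp add: algebra_simps)

lemma U_swap: "U K x y = U K y x"
  unfolding U_def using Pw_neg[of K "x - y"] by (simp add: algebra_simps)

lemma U_negy: "U K x (- y) = U K x y"
  unfolding U_def by (simp add: algebra_simps)

definition F :: "nat \<Rightarrow> int \<Rightarrow> int \<Rightarrow> int" where
  "F K X Y = U K (X - 2) (Y - 1) - U K (X - 1) (Y - 2) - U K (X + 2) (Y - 1) - U K (X - 2) (Y + 1)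
     + U K (X + 2) (Y + 1) + U K (X + 1) (Y - 2) + U K (X - 1) (Y + 2) - U K (X + 1) (Y + 2)"

lemma F_Suc: "F (Suc K) X Y = F K (X + 1) Y + F K (X - 1) Y + F K X (Y + 1) + F K X (Y - 1)"
  unfolding F_def U_Suc by (simp add: algebra_simps)

lemma F_Y0: "F K X 0 = 0"
proof -
  have "\<And>a b. U K a (- b) = U K a b" by (rule U_negy)
  from this[of "X - 2" 1] this[of "X - 1" 2] this[of "X + 2" 1] this[of "X + 1" 2]
  show ?thesis unfolding F_def by simp
qed

lemma F_diag: "F K X X = 0"
  unfolding F_def using U_swap[of K "X - 2" "X - 1"] U_swap[of K "X + 2" "X - 1"]
    U_swap[of K "X - 2" "X + 1"] U_swap[of K "X + 2" "X + 1"] by simp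

fun Wc :: "nat \<Rightarrow> nat \<Rightarrow> nat \<Rightarrow> nat" where
  "Wc a b 0 = (if a = 0 \<and> b = 0 then 1 else 0)"
| "Wc a b (Suc K) = Wc (Suc a) b K + (if b < a then Wc a (Suc b) K + Wc (a - 1) b K else 0)
     + (if 0 < b then Wc a (b - 1) K else 0)"

lemma Wc_F: "b \<le> a \<Longrightarrow> int (Wc a b K) = F K (int a + 2) (int b + 1)"
proof (induction K arbitrary: a b)
  case 0
  then show ?case unfolding F_def U_def by auto
next
  case (Suc K)
  have A: "int (Wc (Suc a) b K) = F K (int a + 2 + 1) (int b + 1)"
    using Suc.IH[of b "Suc a"] Suc.prems by (simp add: algebra_simps)
  have B: "int (if b < a then Wc a (Suc b) K + Wc (a - 1) b K else 0)
       = F K (int a + 2) (int b + 1 + 1) + F K (int a + 2 - 1) (int b + 1)"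
  proof (cases "b < a")
    case True
    then have "int (Wc a (Suc b) K) = F K (int a + 2) (int b + 1 + 1)"
      using Suc.IH[of "Suc b" a] by (simp add: algebra_simps)
    moreover have "int (Wc (a - 1) b K) = F K (int a + 2 - 1) (int b + 1)"
      using Suc.IH[of b "a - 1"] True by (simp add: algebra_simps of_nat_diff)
    ultimately show ?thesis using True by simp
  next
    case False
    then have "a = b" using Suc.prems by simp
    then have e: "int b + 1 + 1 = int a + 2" "int a + 2 - 1 = int b + 1" by simp_all
    show ?thesis using False by (simp only: e F_diag) simp
  qed
  have C: "int (if 0 < b then Wc a (b - 1) K else 0) = F K (int a + 2) (int b + 1 - 1)"
  proof (cases "0 < b")
    case True
    then show ?thesis using Suc.IH[of "b - 1" a] Suc.prems by (simp add: algebra_simps of_nat_diff)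
  next
    case False
    then show ?thesis using F_Y0 by simp
  qed
  show ?case using A B C by (simp only: Wc.simps F_Suc of_nat_add)
qed


lemma key_identity:
  fixes m :: nat and x c1 c2 c3 b d :: real
  assumes h1: "(real m+1)*c1 = real m*x" and h2: "(real m+2)*c2 = (real m-1)*c1"
    and h3: "(real m+3)*c3 = (real m-2)*c2"
    and h4: "(real m+1)^2 * b = (2*real m+1)*(2*real m+2)*x"
    and h5: "(real m+2)^2 * d = (2*real m+3)*(2*real m+4)*b"
  shows "x^2 - x*c1 - c2^2 - c1^2 + c3*c1 + 2*c1*c2 - c3*x
       = (x/(real m+1))*(d/(real m+3)) - (b/(real m+2))^2"
proof -
  define y where "y = real m"
  have p1: "y+1 \<noteq> 0" "y+2 \<noteq> 0" "y+3 \<noteq> 0" unfolding y_def by (simp_all add: add_pos_pos)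
  define z where "z = x / ((y+1)^2*(y+2)^2*(y+3))"
  have ex: "x = (y+1)^2*(y+2)^2*(y+3)*z" unfolding z_def using p1 by simp
  have "(y+1)*c1 = (y+1)*(y*(y+1)*(y+2)^2*(y+3)*z)" using h1 unfolding ex y_def[symmetric]
    by (simp add: algebra_simps power2_eq_square)
  then have e1: "c1 = y*(y+1)*(y+2)^2*(y+3)*z" using p1 by simp
  have "(y+2)*c2 = (y+2)*((y-1)*y*(y+1)*(y+2)*(y+3)*z)" using h2 unfolding e1 y_def[symmetric]
    by (simp add: algebra_simps power2_eq_square)
  then have e2: "c2 = (y-1)*y*(y+1)*(y+2)*(y+3)*z" using p1 by simp
  have "(y+3)*c3 = (y+3)*((y-2)*(y-1)*y*(y+1)*(y+2)*z)" using h3 unfolding e2 y_def[symmetric]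
    by (simp add: algebra_simps power2_eq_square)
  then have e3: "c3 = (y-2)*(y-1)*y*(y+1)*(y+2)*z" using p1 by simp
  have "(y+1)^2*b = (y+1)^2*((2*y+1)*(2*y+2)*(y+2)^2*(y+3)*z)" using h4 unfolding ex y_def[symmetric]
    by (simp add: algebra_simps power2_eq_square)
  then have e4: "b = (2*y+1)*(2*y+2)*(y+2)^2*(y+3)*z" using p1 by simp
  have "(y+2)^2*d = (y+2)^2*((2*y+3)*(2*y+4)*(2*y+1)*(2*y+2)*(y+3)*z)" using h5 unfolding e4 y_def[symmetric]
    by (simp add: algebra_simps power2_eq_square)
  then have e5: "d = (2*y+3)*(2*y+4)*(2*y+1)*(2*y+2)*(y+3)*z" using p1 by simp
  have r1: "x/(y+1) = (y+1)*(y+2)^2*(y+3)*z" using p1 unfolding ex by (simp add: field_simps power2_eq_square)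
  have r2: "d/(y+3) = (2*y+3)*(2*y+4)*(2*y+1)*(2*y+2)*z" using p1 unfolding e5 by (simp add: field_simps)
  have r3: "b/(y+2) = (2*y+1)*(2*y+2)*(y+2)*(y+3)*z" using p1 unfolding e4 by (simp add: field_simps power2_eq_square)
  show ?thesis unfolding y_def[symmetric] r1 r2 r3 unfolding ex e1 e2 e3
    by (simp add: algebra_simps power2_eq_square)
qed

lemma binom_ratio: "Suc k * (n choose Suc k) = (n - k) * (n choose k)"
  by (metis binomial_absorption binomial_absorb_comp)

lemma central: "(Suc m)^2 * ((2 * Suc m) choose (Suc m)) = (2*m+1)*(2*m+2)*((2*m) choose m)"
proof -
  define A where "A = (2 * Suc m) choose (Suc m)"
  define B where "B = (2*m+1) choose m"
  define C where "C = (2*m) choose m"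
  have a: "(2*m+2) * B = A * Suc m"
    using Suc_times_binomial_eq[of "2*m+1" m] unfolding A_def B_def by (simp add: mult_2)
  have b: "(2*m+1) * C = B * Suc m"
    using Suc_times_binomial_eq[of "2*m" m] binomial_symmetric[of m "2*m+1"]
    unfolding B_def C_def by simp
  have "(Suc m)^2 * A = Suc m * (A * Suc m)" by (metis mult.assoc mult.commute power2_eq_square)
  also have "\<dots> = Suc m * ((2*m+2) * B)" by (simp only: a)
  also have "\<dots> = (2*m+2) * (B * Suc m)" by simp
  also have "\<dots> = (2*m+2) * ((2*m+1) * C)" by (simp only: b)
  finally have "(Suc m)^2 * A = (2*m+2) * ((2*m+1) * C)" .
  then show ?thesis unfolding A_def[symmetric] C_def[symmetric] by (metis mult.assoc mult.commute)
qed

lemma cat_mul: "(m+1) * catalan m = (2*m) choose m"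
proof -
  define C0 where "C0 = (2*m) choose m"
  define C1 where "C1 = (2*m) choose (m+1)"
  have r: "(m+1) * C1 = m * C0"
    using binom_ratio[of m "2*m"] unfolding C0_def C1_def by simp
  have "(m+1) * C1 \<le> (m+1) * C0" using r by simp
  then have le: "C1 \<le> C0" using mult_le_cancel1[of "m+1" C1 C0] by simp
  have e: "(m+1) * (C0 - C1) = C0"
    using r le by (simp add: diff_mult_distrib2)
  have "(m+1)*(C0-C1) div (m+1) = C0 - C1" by (rule nonzero_mult_div_cancel_left) simp
  then have "C0 div (m+1) = C0 - C1" using e by simp
  then have "catalan m = C0 - C1"
    unfolding catalan_def C0_def by simp
  then show ?thesis using e C0_def by simp
qed

lemma Pw_even: "Pw (2*m) (2 * int k) = int ((2*m) choose (m+k))"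
proof -
  have a: "Pw (2*m) (int (2*m) - 2 * int (m+k)) = int ((2*m) choose (m+k))" by (rule Pw_binom)
  have b: "int (2*m) - 2 * int (m+k) = - (2 * int k)" by simp
  show ?thesis using a unfolding b Pw_neg .
qed

lemma F_val: "F (2*m) 2 1 = int (catalan m * catalan (m+2)) - int (catalan (m+1))^2"
proof -
  define C0 where "C0 = (2*m) choose m"
  define C1 where "C1 = (2*m) choose (m+1)"
  define C2 where "C2 = (2*m) choose (m+2)"
  define C3 where "C3 = (2*m) choose (m+3)"
  have P0: "Pw (2*m) 0 = int C0" using Pw_even[of m 0] unfolding C0_def by simp
  have P2: "Pw (2*m) 2 = int C1" using Pw_even[of m 1] unfolding C1_def by simp
  have P2': "Pw (2*m) (-2) = int C1" using P2 Pw_neg[of "2*m" 2] by simp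
  have P4: "Pw (2*m) 4 = int C2" using Pw_even[of m 2] unfolding C2_def by simp
  have P6: "Pw (2*m) 6 = int C3" using Pw_even[of m 3] unfolding C3_def by simp
  have FE: "F (2*m) 2 1 = int C0 * int C0 - int C0 * int C1 - int C2 * int C2 - int C1 * int C1
     + int C3 * int C1 + 2 * int C1 * int C2 - int C3 * int C0"
    unfolding F_def U_def by (simp add: P0 P2 P2' P4 P6)
  have h1n: "(m+1)*C1 = m*C0"
    using binom_ratio[of m "2*m"] unfolding C0_def C1_def by simp
  have h1: "(real m+1)*real C1 = real m*real C0"
    using arg_cong[OF h1n, of real] by (simp add: algebra_simps)
  have h2n: "(m+2)*C2 = (m-1)*C1"
    using binom_ratio[of "m+1" "2*m"] unfolding C1_def C2_def by simp
  have h2: "(real m+2)*real C2 = (real m-1)*real C1"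
  proof (cases "m = 0")
    case True
    then have "C1 = 0" unfolding C1_def by simp
    then show ?thesis using h2n by simp
  next
    case False
    then show ?thesis using arg_cong[OF h2n, of real] by (simp add: of_nat_diff algebra_simps)
  qed
  have h3n: "(m+3)*C3 = (m-2)*C2"
  proof -
    have e: "Suc (m+2) = m+3" "2*m - (m+2) = m - 2" by simp_all
    show ?thesis using binom_ratio[of "m+2" "2*m"] unfolding C2_def C3_def e .
  qed
  have h3: "(real m+3)*real C3 = (real m-2)*real C2"
  proof (cases "m \<le> 1")
    case True
    then have "C2 = 0" unfolding C2_def by auto
    then show ?thesis using h3n by simp
  next
    case False
    then show ?thesis using arg_cong[OF h3n, of real] by (simp add: of_nat_diff algebra_simps)
  qed
  define B where "B = (2 * Suc m) choose (Suc m)"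
  define D where "D = (2 * Suc (Suc m)) choose (Suc (Suc m))"
  have h4n: "(Suc m)^2 * B = (2*m+1)*(2*m+2)*C0"
    using central[of m] unfolding B_def C0_def .
  have h4: "(real m+1)^2 * real B = (2*real m+1)*(2*real m+2)*real C0"
    using arg_cong[OF h4n, of real] by (simp add: algebra_simps)
  have h5n: "(Suc (Suc m))^2 * D = (2 * Suc m + 1)*(2 * Suc m + 2) * B"
    using central[of "Suc m"] unfolding B_def D_def .
  have h5: "(real m+2)^2 * real D = (2*real m+3)*(2*real m+4)*real B"
    using arg_cong[OF h5n, of real] by (simp add: algebra_simps)
  have c0: "real (catalan m) = real C0 / (real m + 1)"
    using arg_cong[OF cat_mul[of m], of real] unfolding C0_def[symmetric] by (simp add: field_simps)
  have c1: "real (catalan (m+1)) = real B / (real m + 2)"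
  proof -
    have "(Suc m + 1) * catalan (Suc m) = B" unfolding B_def by (rule cat_mul)
    then have "real (Suc m + 1) * real (catalan (Suc m)) = real B"
      by (metis of_nat_mult)
    then show ?thesis by (simp add: field_simps)
  qed
  have c2: "real (catalan (m+2)) = real D / (real m + 3)"
  proof -
    have "(Suc (Suc m) + 1) * catalan (Suc (Suc m)) = D" unfolding D_def by (rule cat_mul)
    then have "real (Suc (Suc m) + 1) * real (catalan (Suc (Suc m))) = real D"
      by (metis of_nat_mult)
    moreover have "m + 2 = Suc (Suc m)" by simp
    ultimately show ?thesis by (simp add: field_simps)
  qed
  have K: "real C0^2 - real C0*real C1 - real C2^2 - real C1^2 + real C3*real C1 + 2*real C1*real C2 - real C3*real C0
       = (real C0/(real m+1))*(real D/(real m+3)) - (real B/(real m+2))^2"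
    by (rule key_identity[OF h1 h2 h3 h4 h5])
  have "real_of_int (F (2*m) 2 1) = real (catalan m) * real (catalan (m+2)) - real (catalan (m+1))^2"
    unfolding FE c0 c1 c2 K[symmetric] by (simp add: power2_eq_square)
  then have "real_of_int (F (2*m) 2 1) = real_of_int (int (catalan m * catalan (m+2)) - int (catalan (m+1))^2)"
    by simp
  then show ?thesis by (simp only: of_int_eq_iff)
qed

lemma F_odd: "F (Suc (2*m)) 2 1 = 0"
  unfolding F_def U_def by (simp add: Pw_odd)


datatype stp = Stay | U1 | U2 | D1 | D2

fun Rf :: "nat \<Rightarrow> nat \<Rightarrow> nat \<Rightarrow> bool \<Rightarrow> nat \<Rightarrow> nat" where
  "Rf a b l f 0 = (if a = 0 \<and> b = 0 \<and> l = 0 then 1 else 0)"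
| "Rf a b l f (Suc n) = (if 0 < l then Rf a b (l - 1) False n else 0) + Rf (Suc a) b l True n
     + (if b < a then Rf a (Suc b) l False n else 0) + (if b < a \<and> \<not> f then Rf (a - 1) b l False n else 0)
     + (if 0 < b then Rf a (b - 1) l False n else 0)"

fun Gc :: "nat \<Rightarrow> nat \<Rightarrow> nat \<Rightarrow> nat \<Rightarrow> nat" where
  "Gc a b l 0 = (if a = 0 \<and> b = 0 \<and> l = 0 then 1 else 0)"
| "Gc a b l (Suc n) = (if 0 < l then Gc a b (l - 1) n else 0) + Gc (Suc a) b l n
     + (if b < a then Gc a (Suc b) l n + Gc (a - 1) b l n else 0) + (if 0 < b then Gc a (b - 1) l n else 0)"

lemma Gc_W: "Gc a b l n = (n choose l) * Wc a b (n - l)"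
proof (induction n arbitrary: a b l)
  case 0 then show ?case by (cases l) auto
next
  case (Suc n)
  consider (le) "l \<le> n" | (eq) "l = Suc n" | (gt) "l > Suc n" by linarith
  then show ?case
  proof cases
    case le
    define k where "k = n - l"
    have nk: "n - l = k" "Suc n - l = Suc k" using le k_def by auto
    have W: "Wc a b (Suc k) = Wc (Suc a) b k + (if b < a then Wc a (Suc b) k + Wc (a - 1) b k else 0)
     + (if 0 < b then Wc a (b - 1) k else 0)" by simp
    show ?thesis
    proof (cases l)
      case 0
      then show ?thesis using Suc.IH nk by (simp add: algebra_simps)
    next
      case (Suc l')
      have e: "n - l' = Suc k" using le nk Suc by simp
      have "Gc a b l (Suc n) = (n choose l') * Wc a b (Suc k) + (n choose l) * Wc a b (Suc k)"
        unfolding W using Suc.IH Suc nk e by (simp add: algebra_simps)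
      also have "\<dots> = (Suc n choose l) * Wc a b (Suc n - l)" using Suc nk by (simp add: algebra_simps)
      finally show ?thesis .
    qed
  next
    case eq
    then show ?thesis using Suc.IH by simp
  next
    case gt
    then show ?thesis using Suc.IH by (simp add: binomial_eq_0)
  qed
qed

definition hh :: "(nat \<Rightarrow> int) \<Rightarrow> nat \<Rightarrow> int" where
  "hh f n = (\<Sum>k\<le>n. (-1)^k * int ((n - k) choose k) * f (n - 2*k))"

lemma hh_0: "hh f 0 = f 0" unfolding hh_def by simp

lemma hh_add: "hh (\<lambda>n. f n + g n) N = hh f N + hh g N"
  unfolding hh_def by (simp add: algebra_simps sum.distrib)

lemma hh_if: "hh (\<lambda>n. if c then f n else 0) N = (if c then hh f N else 0)"
  unfolding hh_def by simp

lemma hh_one: assumes "\<And>n. g (Suc n) = gs n" shows "hh g (Suc 0) = hh gs 0"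
  unfolding hh_def using assms by simp

lemma hh_rec: assumes g: "\<And>n. g (Suc n) = gs n"
  shows "hh g (Suc (Suc m)) = hh gs (Suc m) - hh g m"
proof -
  define A where "A = (\<lambda>k. (-1)^k * int ((Suc m - k) choose k) * g (Suc (Suc m) - 2*k))"
  define B where "B = (\<lambda>k. if k = 0 then 0 else (-1)^k * int ((Suc m - k) choose (k - 1)) * g (Suc (Suc m) - 2*k))"
  have T: "hh g (Suc (Suc m)) = (\<Sum>k\<le>Suc m. A k + B k)"
  proof -
    have "hh g (Suc (Suc m)) = (\<Sum>k\<le>Suc m. (-1)^k * int ((Suc (Suc m) - k) choose k) * g (Suc (Suc m) - 2*k))"
      unfolding hh_def by (simp add: sum.atMost_Suc)
    also have "\<dots> = (\<Sum>k\<le>Suc m. A k + B k)"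
    proof (rule sum.cong[OF refl])
      fix k assume "k \<in> {..Suc m}"
      then have k: "k \<le> Suc m" by simp
      show "(-1)^k * int ((Suc (Suc m) - k) choose k) * g (Suc (Suc m) - 2*k) = A k + B k"
      proof (cases k)
        case 0 then show ?thesis unfolding A_def B_def by simp
      next
        case (Suc k')
        have e: "Suc (Suc m) - Suc k' = Suc (m - k')" "Suc m - Suc k' = m - k'" using k Suc by simp_all
        have "(Suc (Suc m) - k) choose k = ((Suc m - k) choose k) + ((Suc m - k) choose k')"
          unfolding Suc unfolding e by (simp only: binomial_Suc_Suc add.commute)
        then show ?thesis unfolding A_def B_def using Suc by (simp add: algebra_simps)
      qed
    qed
    finally show ?thesis .
  qed
  have SA: "(\<Sum>k\<le>Suc m. A k) = hh gs (Suc m)"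
    unfolding hh_def
  proof (rule sum.cong[OF refl])
    fix k assume "k \<in> {..Suc m}"
    show "A k = (-1)^k * int ((Suc m - k) choose k) * gs (Suc m - 2*k)"
    proof (cases "2*k \<le> Suc m")
      case True
      then have "Suc (Suc m) - 2*k = Suc (Suc m - 2*k)" by simp
      then show ?thesis unfolding A_def using g by simp
    next
      case False
      then have "Suc m - k < k" by simp
      then show ?thesis unfolding A_def by simp
    qed
  qed
  have SB: "(\<Sum>k\<le>Suc m. B k) = - hh g m"
  proof -
    have "(\<Sum>k\<le>Suc m. B k) = B 0 + (\<Sum>k\<le>m. B (Suc k))" by (rule sum.atMost_Suc_shift)
    also have "\<dots> = (\<Sum>k\<le>m. - ((-1)^k * int ((m - k) choose k) * g (m - 2*k)))"
      unfolding B_def by simp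
    also have "\<dots> = - hh g m" unfolding hh_def by (simp add: sum_negf)
    finally show ?thesis .
  qed
  show ?thesis using T SA SB by (simp add: sum.distrib)
qed

definition nb :: "(nat \<Rightarrow> nat \<Rightarrow> nat \<Rightarrow> int) \<Rightarrow> nat \<Rightarrow> nat \<Rightarrow> nat \<Rightarrow> int" where
  "nb g a b l = (if 0 < l then g a b (l - 1) else 0) + g (Suc a) b l
     + (if b < a then g a (Suc b) l + g (a - 1) b l else 0) + (if 0 < b then g a (b - 1) l else 0)"

definition Hc :: "nat \<Rightarrow> nat \<Rightarrow> nat \<Rightarrow> nat \<Rightarrow> int" where
  "Hc a b l n = hh (\<lambda>n. int (Gc a b l n)) n"

lemma hh_nb: "hh (\<lambda>n. nb (\<lambda>a b l. G a b l n) a b l) N = nb (\<lambda>a b l. hh (G a b l) N) a b l"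
  unfolding nb_def by (simp add: hh_add hh_if)

lemma Gc_Suc_nb: "int (Gc a b l (Suc n)) = nb (\<lambda>a b l. int (Gc a b l n)) a b l"
  unfolding nb_def by simp

lemma Hc_rec2: "Hc a b l (Suc (Suc m)) = nb (\<lambda>a b l. Hc a b l (Suc m)) a b l - Hc a b l m"
  unfolding Hc_def
  using hh_rec[of "\<lambda>n. int (Gc a b l n)" "\<lambda>n. nb (\<lambda>a b l. int (Gc a b l n)) a b l" m, OF Gc_Suc_nb]
  by (simp add: hh_nb)

lemma Hc_rec1: "Hc a b l (Suc 0) = nb (\<lambda>a b l. Hc a b l 0) a b l"
  unfolding Hc_def
  using hh_one[of "\<lambda>n. int (Gc a b l n)" "\<lambda>n. nb (\<lambda>a b l. int (Gc a b l n)) a b l", OF Gc_Suc_nb]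
  by (simp add: hh_nb)

definition Rc :: "nat \<Rightarrow> nat \<Rightarrow> nat \<Rightarrow> nat \<Rightarrow> int" where
  "Rc a b l n = int (Rf a b l False n)"

lemma Rc_rec1: "Rc a b l (Suc 0) = nb (\<lambda>a b l. Rc a b l 0) a b l"
  unfolding Rc_def nb_def by simp

lemma Rc_rec2: "b \<le> a \<Longrightarrow> Rc a b l (Suc (Suc m)) = nb (\<lambda>a b l. Rc a b l (Suc m)) a b l - Rc a b l m"
proof -
  assume ba: "b \<le> a"
  have t: "int (Rf (Suc a) b l True (Suc m)) = Rc (Suc a) b l (Suc m) - Rc a b l m"
    unfolding Rc_def Rf.simps(2)[of "Suc a" b l True m] Rf.simps(2)[of "Suc a" b l False m]
    using ba by (simp del: Rf.simps)
  have "Rc a b l (Suc (Suc m)) = (if 0 < l then Rc a b (l - 1) (Suc m) else 0) + int (Rf (Suc a) b l True (Suc m))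
     + (if b < a then Rc a (Suc b) l (Suc m) + Rc (a - 1) b l (Suc m) else 0)
     + (if 0 < b then Rc a (b - 1) l (Suc m) else 0)"
    unfolding Rc_def Rf.simps(2)[of a b l False "Suc m"] by (simp del: Rf.simps)
  also have "\<dots> = (if 0 < l then Rc a b (l - 1) (Suc m) else 0) + (Rc (Suc a) b l (Suc m) - Rc a b l m)
     + (if b < a then Rc a (Suc b) l (Suc m) + Rc (a - 1) b l (Suc m) else 0)
     + (if 0 < b then Rc a (b - 1) l (Suc m) else 0)" by (simp only: t)
  also have "\<dots> = nb (\<lambda>a b l. Rc a b l (Suc m)) a b l - Rc a b l m"
    unfolding nb_def by (simp del: Rf.simps)
  finally show ?thesis .
qed

lemma nb_cong: "b \<le> a \<Longrightarrow> (\<And>a' b' l'. b' \<le> a' \<Longrightarrow> f a' b' l' = g a' b' l') \<Longrightarrow> nb f a b l = nb g a b l"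
  unfolding nb_def by auto

lemma Rc_Hc: "b \<le> a \<Longrightarrow> Rc a b l n = Hc a b l n"
proof -
  have "\<forall>a b l. b \<le> a \<longrightarrow> Rc a b l n = Hc a b l n \<and> Rc a b l (Suc n) = Hc a b l (Suc n)"
  proof (induction n)
    case 0
    have z: "\<And>a b l. Rc a b l 0 = Hc a b l 0" unfolding Rc_def Hc_def hh_0 by simp
    show ?case
    proof (intro allI impI conjI)
      fix a b l :: nat assume "b \<le> a"
      show "Rc a b l 0 = Hc a b l 0" by (rule z)
      show "Rc a b l (Suc 0) = Hc a b l (Suc 0)" unfolding Rc_rec1 Hc_rec1
        by (rule nb_cong[OF \<open>b \<le> a\<close>]) (rule z)
    qed
  next
    case (Suc n)
    show ?case
    proof (intro allI impI conjI)
      fix a b l :: nat assume ba: "b \<le> a"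
      have eq: "\<And>a' b' l'. b' \<le> a' \<Longrightarrow> Rc a' b' l' (Suc n) = Hc a' b' l' (Suc n)" using Suc by blast
      have eq0: "Rc a b l n = Hc a b l n" using Suc ba by blast
      show "Rc a b l (Suc n) = Hc a b l (Suc n)" using eq ba by blast
      have "nb (\<lambda>a b l. Rc a b l (Suc n)) a b l = nb (\<lambda>a b l. Hc a b l (Suc n)) a b l"
        by (rule nb_cong[OF ba]) (rule eq)
      then show "Rc a b l (Suc (Suc n)) = Hc a b l (Suc (Suc n))" unfolding Rc_rec2[OF ba] Hc_rec2 eq0
        by simp
    qed
  qed
  then show "b \<le> a \<Longrightarrow> ?thesis" by simp
qed


definition Ecat :: "nat \<Rightarrow> int" where
  "Ecat K = catalan_half K * catalan_half (K + 4) - (catalan_half (K + 2))^2"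

lemma Wc_Ecat: "int (Wc 0 0 K) = Ecat K"
proof -
  have W: "int (Wc 0 0 K) = F K 2 1" using Wc_F[of 0 0 K] by simp
  show ?thesis
  proof (cases "even K")
    case True
    then obtain m where m: "K = 2*m" by (rule evenE)
    have "(2*m + 4) div 2 = m + 2" "(2*m+2) div 2 = m + 1" by simp_all
    then show ?thesis using W unfolding m F_val Ecat_def catalan_half_def by simp
  next
    case False
    then obtain m where m: "K = Suc (2*m)" using oddE by fastforce
    show ?thesis using W unfolding m F_odd Ecat_def catalan_half_def by simp
  qed
qed

theorem count_final:
  "int (Rf 0 0 l False n) =
    (\<Sum>b = 0..(n - l) div 2. (-1) ^ b * int ((n - b) choose b) * int ((n - 2*b) choose l) *
       (catalan_half (n - l - 2*b) * catalan_half (n - l - 2*b + 4)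
        - (catalan_half (n - l - 2*b + 2))^2))"
proof -
  have "int (Rf 0 0 l False n) = Hc 0 0 l n" using Rc_Hc[of 0 0 l n] unfolding Rc_def by simp
  also have "\<dots> = (\<Sum>k\<le>n. (-1)^k * int ((n - k) choose k) * int ((n - 2*k) choose l) * Ecat (n - 2*k - l))"
    unfolding Hc_def hh_def Gc_W by (simp add: Wc_Ecat mult.assoc)
  also have "\<dots> = (\<Sum>k = 0..(n - l) div 2. (-1)^k * int ((n - k) choose k) * int ((n - 2*k) choose l) * Ecat (n - l - 2*k))"
  proof -
    have sub: "{0..(n - l) div 2} \<subseteq> {..n}" by auto
    have z: "\<forall>k\<in>{..n} - {0..(n - l) div 2}. (-1)^k * int ((n - k) choose k) * int ((n - 2*k) choose l) * Ecat (n - 2*k - l) = 0"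
    proof
      fix k assume "k \<in> {..n} - {0..(n - l) div 2}"
      then have k: "(n - l) div 2 < k" by auto
      show "(-1)^k * int ((n - k) choose k) * int ((n - 2*k) choose l) * Ecat (n - 2*k - l) = 0"
      proof (cases "2*k \<le> n")
        case True
        then have "n - 2*k < l" using k by linarith
        then show ?thesis by simp
      next
        case False
        then have "n - k < k" by linarith
        then show ?thesis by simp
      qed
    qed
    have "(\<Sum>k\<le>n. (-1)^k * int ((n - k) choose k) * int ((n - 2*k) choose l) * Ecat (n - 2*k - l))
        = (\<Sum>k = 0..(n - l) div 2. (-1)^k * int ((n - k) choose k) * int ((n - 2*k) choose l) * Ecat (n - 2*k - l))"
      by (rule sum.mono_neutral_right[OF _ sub z]) simp
    also have "\<dots> = (\<Sum>k = 0..(n - l) div 2. (-1)^k * int ((n - k) choose k) * int ((n - 2*k) choose l) * Ecat (n - l - 2*k))"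
      by (rule sum.cong[OF refl]) (simp add: diff_commute add.commute)
    finally show ?thesis .
  qed
  finally show ?thesis unfolding Ecat_def by simp
qed


type_synonym tb = "nat set \<times> nat set"

definition tab_ok :: "tb \<Rightarrow> bool" where
  "tab_ok S \<longleftrightarrow> finite (fst S) \<and> finite (snd S) \<and> fst S \<inter> snd S = {} \<and>
     (\<forall>y\<in>snd S. card {z\<in>snd S. z \<le> y} \<le> card {z\<in>fst S. z < y})"

definition els :: "tb \<Rightarrow> nat set" where "els S = fst S \<union> snd S"

definition shape :: "tb \<Rightarrow> nat \<times> nat" where "shape S = (card (fst S), card (snd S))"

fun stepsh :: "stp \<Rightarrow> nat \<times> nat \<Rightarrow> nat \<times> nat" where
  "stepsh Stay s = s"
| "stepsh U1 (a,b) = (Suc a, b)"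
| "stepsh U2 (a,b) = (a, Suc b)"
| "stepsh D1 (a,b) = (a - 1, b)"
| "stepsh D2 (a,b) = (a, b - 1)"

fun allowed :: "stp \<Rightarrow> nat \<times> nat \<Rightarrow> bool" where
  "allowed Stay s = True"
| "allowed U1 s = True"
| "allowed U2 (a,b) = (b < a)"
| "allowed D1 (a,b) = (b < a)"
| "allowed D2 (a,b) = (0 < b)"

definition ejct :: "stp \<Rightarrow> tb \<Rightarrow> nat" where
  "ejct s S = (if s = D1 then Max (fst S) else Max {z \<in> fst S. z < Max (snd S)})"

fun phop :: "nat \<Rightarrow> stp \<Rightarrow> tb \<Rightarrow> tb" where
  "phop t Stay S = S"
| "phop t U1 S = (insert t (fst S), snd S)"
| "phop t U2 S = (fst S, insert t (snd S))"
| "phop t D1 S = (fst S - {Max (fst S)}, snd S)"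
| "phop t D2 S = (insert (Max (snd S)) (fst S - {Max {z \<in> fst S. z < Max (snd S)}}), snd S - {Max (snd S)})"

lemma tab_ok_card: "tab_ok S \<Longrightarrow> card (snd S) \<le> card (fst S)"
proof -
  assume ok: "tab_ok S"
  show ?thesis
  proof (cases "snd S = {}")
    case True then show ?thesis by simp
  next
    case False
    define y where "y = Max (snd S)"
    have fin: "finite (snd S)" "finite (fst S)" using ok unfolding tab_ok_def by auto
    have y: "y \<in> snd S" using False fin unfolding y_def by simp
    have "{z\<in>snd S. z \<le> y} = snd S" using fin unfolding y_def by auto
    then have "card (snd S) \<le> card {z\<in>fst S. z < y}" using ok y unfolding tab_ok_def by metis
    also have "\<dots> \<le> card (fst S)" using fin by (intro card_mono) auto
    finally show ?thesis .
  qed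
qed

lemma ph_Stay: "phop t Stay S = S" by simp

lemma ph_U1:
  assumes ok: "tab_ok S" and lt: "\<forall>x\<in>els S. x < t"
  shows "tab_ok (phop t U1 S)" "shape (phop t U1 S) = stepsh U1 (shape S)"
    "els (phop t U1 S) = insert t (els S)"
proof -
  obtain R1 R2 where S: "S = (R1, R2)" by fastforce
  have fin: "finite R1" "finite R2" and dis: "R1 \<inter> R2 = {}"
    and cs: "\<forall>y\<in>R2. card {z\<in>R2. z \<le> y} \<le> card {z\<in>R1. z < y}" using ok S unfolding tab_ok_def by auto
  have tR: "t \<notin> R1" "t \<notin> R2" using lt S unfolding els_def by auto
  have "\<forall>y\<in>R2. card {z\<in>R2. z \<le> y} \<le> card {z\<in>insert t R1. z < y}"
  proof
    fix y assume y: "y \<in> R2"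
    have "card {z\<in>R1. z < y} \<le> card {z\<in>insert t R1. z < y}" using fin by (intro card_mono) auto
    then show "card {z\<in>R2. z \<le> y} \<le> card {z\<in>insert t R1. z < y}" using cs y by (meson le_trans)
  qed
  then show "tab_ok (phop t U1 S)" using fin dis tR S unfolding tab_ok_def by auto
  show "shape (phop t U1 S) = stepsh U1 (shape S)" using S fin tR unfolding shape_def by simp
  show "els (phop t U1 S) = insert t (els S)" using S unfolding els_def by auto
qed

lemma ph_U2:
  assumes ok: "tab_ok S" and lt: "\<forall>x\<in>els S. x < t" and al: "allowed U2 (shape S)"
  shows "tab_ok (phop t U2 S)" "shape (phop t U2 S) = stepsh U2 (shape S)"
    "els (phop t U2 S) = insert t (els S)"
proof -
  obtain R1 R2 where S: "S = (R1, R2)" by fastforce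
  have fin: "finite R1" "finite R2" and dis: "R1 \<inter> R2 = {}"
    and cs: "\<forall>y\<in>R2. card {z\<in>R2. z \<le> y} \<le> card {z\<in>R1. z < y}" using ok S unfolding tab_ok_def by auto
  have tR: "t \<notin> R1" "t \<notin> R2" using lt S unfolding els_def by auto
  have ab: "card R2 < card R1" using al S unfolding shape_def by simp
  have "\<forall>y\<in>insert t R2. card {z\<in>insert t R2. z \<le> y} \<le> card {z\<in>R1. z < y}"
  proof
    fix y assume y: "y \<in> insert t R2"
    show "card {z\<in>insert t R2. z \<le> y} \<le> card {z\<in>R1. z < y}"
    proof (cases "y = t")
      case True
      have "\<forall>x\<in>R2. x < t" using lt S unfolding els_def by auto
      then have "{z\<in>insert t R2. z \<le> y} = insert t R2" using True by auto
      moreover have "{z\<in>R1. z < y} = R1" using lt S True unfolding els_def by auto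
      ultimately show ?thesis using fin tR ab by simp
    next
      case False
      then have yR: "y \<in> R2" using y by simp
      then have "y < t" using lt S unfolding els_def by auto
      then have "{z\<in>insert t R2. z \<le> y} = {z\<in>R2. z \<le> y}" by auto
      then show ?thesis using cs yR by simp
    qed
  qed
  then show "tab_ok (phop t U2 S)" using fin dis tR S unfolding tab_ok_def by auto
  show "shape (phop t U2 S) = stepsh U2 (shape S)" using S fin tR unfolding shape_def by simp
  show "els (phop t U2 S) = insert t (els S)" using S unfolding els_def by auto
qed

lemma ph_D1:
  assumes ok: "tab_ok S" and al: "allowed D1 (shape S)"
  shows "tab_ok (phop t D1 S)" "shape (phop t D1 S) = stepsh D1 (shape S)"
    "els (phop t D1 S) = els S - {ejct D1 S}" "ejct D1 S \<in> fst S"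
proof -
  obtain R1 R2 where S: "S = (R1, R2)" by fastforce
  have fin: "finite R1" "finite R2" and dis: "R1 \<inter> R2 = {}"
    and cs: "\<forall>y\<in>R2. card {z\<in>R2. z \<le> y} \<le> card {z\<in>R1. z < y}" using ok S unfolding tab_ok_def by auto
  have ab: "card R2 < card R1" using al S unfolding shape_def by simp
  then have ne: "R1 \<noteq> {}" by auto
  define m where "m = Max R1"
  have mR: "m \<in> R1" using fin ne unfolding m_def by simp
  have mge: "\<And>z. z \<in> R1 \<Longrightarrow> z \<le> m" using fin unfolding m_def by simp
  have "\<forall>y\<in>R2. card {z\<in>R2. z \<le> y} \<le> card {z\<in>R1 - {m}. z < y}"
  proof
    fix y assume yR: "y \<in> R2"
    show "card {z\<in>R2. z \<le> y} \<le> card {z\<in>R1 - {m}. z < y}"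
    proof (cases "m < y")
      case True
      have e: "{z\<in>R1 - {m}. z < y} = R1 - {m}" using True mge by fastforce
      have "card {z\<in>R2. z \<le> y} \<le> card R2" using fin by (intro card_mono) auto
      also have "\<dots> \<le> card (R1 - {m})" using ab mR fin by simp
      finally show ?thesis unfolding e .
    next
      case False
      have "m \<noteq> y" using dis mR yR by auto
      then have "y < m" using False by simp
      then have "{z\<in>R1 - {m}. z < y} = {z\<in>R1. z < y}" by auto
      then show ?thesis using cs yR by simp
    qed
  qed
  then show "tab_ok (phop t D1 S)" using fin dis S unfolding tab_ok_def m_def by auto
  show "shape (phop t D1 S) = stepsh D1 (shape S)" using S fin mR unfolding shape_def m_def by simp
  show "els (phop t D1 S) = els S - {ejct D1 S}" using S dis mR unfolding els_def ejct_def m_def by auto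
  show "ejct D1 S \<in> fst S" using S mR unfolding ejct_def m_def by simp
qed

lemma ph_D2:
  assumes ok: "tab_ok S" and al: "allowed D2 (shape S)"
  shows "tab_ok (phop t D2 S)" "shape (phop t D2 S) = stepsh D2 (shape S)"
    "els (phop t D2 S) = els S - {ejct D2 S}" "ejct D2 S \<in> fst S"
proof -
  obtain R1 R2 where S: "S = (R1, R2)" by fastforce
  have fin: "finite R1" "finite R2" and dis: "R1 \<inter> R2 = {}"
    and cs: "\<forall>y\<in>R2. card {z\<in>R2. z \<le> y} \<le> card {z\<in>R1. z < y}" using ok S unfolding tab_ok_def by auto
  have ne: "R2 \<noteq> {}" using al S unfolding shape_def by auto
  define y0 where "y0 = Max R2"
  have y0R: "y0 \<in> R2" using fin ne unfolding y0_def by simp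
  have y0ge: "\<And>z. z \<in> R2 \<Longrightarrow> z \<le> y0" using fin unfolding y0_def by simp
  define X where "X = {z\<in>R1. z < y0}"
  have finX: "finite X" using fin unfolding X_def by simp
  have "{z\<in>R2. z \<le> y0} = R2" using y0ge by auto
  then have cR2X: "card R2 \<le> card X" using cs y0R unfolding X_def by metis
  have "card R2 > 0" using ne fin by auto
  then have neX: "X \<noteq> {}" using cR2X by auto
  define x where "x = Max X"
  have xX: "x \<in> X" using finX neX unfolding x_def by simp
  have xR1: "x \<in> R1" "x < y0" using xX unfolding X_def by auto
  have xge: "\<And>z. z \<in> X \<Longrightarrow> z \<le> x" using finX unfolding x_def by simp
  have y0nR1: "y0 \<notin> R1" using dis y0R by auto
  have xnR2: "x \<notin> R2" using dis xR1 by auto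
  have P: "phop t D2 S = (insert y0 (R1 - {x}), R2 - {y0})" using S unfolding y0_def x_def X_def by simp
  have "\<forall>y\<in>R2 - {y0}. card {z\<in>R2 - {y0}. z \<le> y} \<le> card {z\<in>insert y0 (R1 - {x}). z < y}"
  proof
    fix y assume yR: "y \<in> R2 - {y0}"
    then have yl: "y < y0" using y0ge by fastforce
    have e1: "{z\<in>R2 - {y0}. z \<le> y} = {z\<in>R2. z \<le> y}" using yl by auto
    show "card {z\<in>R2 - {y0}. z \<le> y} \<le> card {z\<in>insert y0 (R1 - {x}). z < y}"
    proof (cases "x < y")
      case True
      have e2: "{z\<in>insert y0 (R1 - {x}). z < y} = X - {x}"
      proof
        show "{z\<in>insert y0 (R1 - {x}). z < y} \<subseteq> X - {x}" using yl unfolding X_def by auto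
        show "X - {x} \<subseteq> {z\<in>insert y0 (R1 - {x}). z < y}"
        proof
          fix z assume z: "z \<in> X - {x}"
          then have "z \<le> x" using xge by auto
          then show "z \<in> {z\<in>insert y0 (R1 - {x}). z < y}" using z True unfolding X_def by auto
        qed
      qed
      have "card {z\<in>R2. z \<le> y} \<le> card (R2 - {y0})" using fin yl by (intro card_mono) auto
      also have "\<dots> = card R2 - 1" using y0R fin by simp
      also have "\<dots> \<le> card X - 1" using cR2X by simp
      also have "\<dots> = card (X - {x})" using xX finX by simp
      finally show ?thesis unfolding e1 e2 .
    next
      case False
      then have "{z\<in>insert y0 (R1 - {x}). z < y} = {z\<in>R1. z < y}" using yl by auto
      then show ?thesis unfolding e1 using cs yR by simp
    qed
  qed
  then show "tab_ok (phop t D2 S)" unfolding P tab_ok_def using fin dis by auto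
  have c1: "card R1 > 0" using xR1 fin card_gt_0_iff by blast
  show "shape (phop t D2 S) = stepsh D2 (shape S)" unfolding P shape_def using S fin y0nR1 xR1 y0R c1
    by (simp add: card_insert_if)
  show "els (phop t D2 S) = els S - {ejct D2 S}" unfolding P els_def ejct_def
    using S y0R xR1 xnR2 y0nR1 unfolding x_def X_def y0_def by auto
  show "ejct D2 S \<in> fst S" using S xR1 unfolding ejct_def x_def X_def y0_def by simp
qed


definition inso :: "nat \<Rightarrow> tb \<Rightarrow> tb option" where
  "inso x S = (if (\<forall>z\<in>fst S. z < x) then Some (insert x (fst S), snd S)
     else (let y = Min {z\<in>fst S. x < z} in
           if (\<forall>z\<in>snd S. z < y) then Some (insert x (fst S - {y}), insert y (snd S)) else None))"

definition rlop :: "(nat \<times> nat) set \<Rightarrow> nat \<Rightarrow> tb \<Rightarrow> tb option" where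
  "rlop A t S = (if (\<exists>x. (x,t) \<in> A) then inso (THE x. (x,t) \<in> A) S
     else if (\<exists>j. (t,j) \<in> A) then Some (if t \<in> fst S then (fst S - {t}, snd S) else (fst S, snd S - {t}))
     else Some S)"

definition rllet :: "(nat \<times> nat) set \<Rightarrow> nat \<Rightarrow> tb \<Rightarrow> stp" where
  "rllet A t S = (if (\<exists>x. (x,t) \<in> A) then (if (\<forall>z\<in>fst S. z < (THE x. (x,t) \<in> A)) then D1 else D2)
     else if (\<exists>j. (t,j) \<in> A) then (if t \<in> fst S then U1 else U2) else Stay)"

lemma ins_D1:
  assumes ok: "tab_ok S" and xn: "x \<notin> els S" and all: "\<forall>z\<in>fst S. z < x"
    and S': "S' = (insert x (fst S), snd S)"
  shows "tab_ok S'" "els S' = insert x (els S)" "allowed D1 (shape S')" "phop t D1 S' = S"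
    "ejct D1 S' = x" "stepsh D1 (shape S') = shape S"
proof -
  obtain R1 R2 where S: "S = (R1, R2)" by fastforce
  have fin: "finite R1" "finite R2" and dis: "R1 \<inter> R2 = {}"
    and cs: "\<forall>y\<in>R2. card {z\<in>R2. z \<le> y} \<le> card {z\<in>R1. z < y}" using ok S unfolding tab_ok_def by auto
  have xR: "x \<notin> R1" "x \<notin> R2" using xn S unfolding els_def by auto
  have "\<forall>y\<in>R2. card {z\<in>R2. z \<le> y} \<le> card {z\<in>insert x R1. z < y}"
  proof
    fix y assume y: "y \<in> R2"
    have "card {z\<in>R1. z < y} \<le> card {z\<in>insert x R1. z < y}" using fin by (intro card_mono) auto
    then show "card {z\<in>R2. z \<le> y} \<le> card {z\<in>insert x R1. z < y}" using cs y by (meson le_trans)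
  qed
  then show "tab_ok S'" using fin dis xR S S' unfolding tab_ok_def by auto
  show "els S' = insert x (els S)" using S S' unfolding els_def by auto
  have le: "card R2 \<le> card R1" using tab_ok_card[OF ok] S by simp
  show "allowed D1 (shape S')" using S S' fin xR le unfolding shape_def by simp
  have mx: "Max (insert x R1) = x" using fin all S by (simp add: Max_insert2 less_imp_le)
  show "phop t D1 S' = S" using S S' mx xR by simp
  show "ejct D1 S' = x" using S S' mx unfolding ejct_def by simp
  show "stepsh D1 (shape S') = shape S" using S S' fin xR unfolding shape_def by simp
qed

lemma ins_D2:
  assumes ok: "tab_ok S" and xn: "x \<notin> els S" and nall: "\<not> (\<forall>z\<in>fst S. z < x)"
    and y: "y = Min {z\<in>fst S. x < z}" and all2: "\<forall>z\<in>snd S. z < y"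
    and S': "S' = (insert x (fst S - {y}), insert y (snd S))"
  shows "tab_ok S'" "els S' = insert x (els S)" "allowed D2 (shape S')" "phop t D2 S' = S"
    "ejct D2 S' = x" "stepsh D2 (shape S') = shape S"
proof -
  obtain R1 R2 where S: "S = (R1, R2)" by fastforce
  have fin: "finite R1" "finite R2" and dis: "R1 \<inter> R2 = {}"
    and cs: "\<forall>y\<in>R2. card {z\<in>R2. z \<le> y} \<le> card {z\<in>R1. z < y}" using ok S unfolding tab_ok_def by auto
  have xR: "x \<notin> R1" "x \<notin> R2" using xn S unfolding els_def by auto
  have neY: "{z\<in>R1. x < z} \<noteq> {}" using nall S xR by (auto simp: not_less order.order_iff_strict)
  have yY: "y \<in> R1" "x < y" using Min_in[OF _ neY] fin y S by auto
  have ymin: "\<And>z. z \<in> R1 \<Longrightarrow> x < z \<Longrightarrow> y \<le> z" using fin y S by simp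
  have below: "\<And>z. z \<in> R1 \<Longrightarrow> z < y \<Longrightarrow> z < x"
  proof -
    fix z assume z: "z \<in> R1" "z < y"
    have "\<not> x < z" using ymin[OF z(1)] z(2) by auto
    moreover have "z \<noteq> x" using z xR by auto
    ultimately show "z < x" by simp
  qed
  have yR2: "y \<notin> R2" using dis yY by auto
  have R2y: "\<forall>z\<in>R2. z < y" using all2 S by simp
  have cs': "\<forall>v\<in>insert y R2. card {z\<in>insert y R2. z \<le> v} \<le> card {z\<in>insert x (R1 - {y}). z < v}"
  proof
    fix v assume v: "v \<in> insert y R2"
    show "card {z\<in>insert y R2. z \<le> v} \<le> card {z\<in>insert x (R1 - {y}). z < v}"
    proof (cases "v = y")
      case True
      have e1: "{z\<in>insert y R2. z \<le> v} = insert y R2" using True R2y by auto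
      have e2: "{z\<in>insert x (R1 - {y}). z < v} = insert x {z\<in>R1. z < y}" using True yY by auto
      have c2: "card R2 \<le> card {z\<in>R1. z < y}"
      proof (cases "R2 = {}")
        case True then show ?thesis by simp
      next
        case False
        define y2 where "y2 = Max R2"
        have y2R: "y2 \<in> R2" using False fin unfolding y2_def by simp
        have "{z\<in>R2. z \<le> y2} = R2" using fin unfolding y2_def by auto
        then have "card R2 \<le> card {z\<in>R1. z < y2}" using cs y2R by metis
        also have "\<dots> \<le> card {z\<in>R1. z < y}" using fin R2y y2R by (intro card_mono) auto
        finally show ?thesis .
      qed
      have "card (insert y R2) = Suc (card R2)" using fin yR2 by simp
      moreover have "card (insert x {z\<in>R1. z < y}) = Suc (card {z\<in>R1. z < y})" using fin xR by simp
      ultimately show ?thesis unfolding e1 e2 using c2 by simp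
    next
      case False
      then have vR: "v \<in> R2" using v by simp
      then have vy: "v < y" using R2y by simp
      have e1: "{z\<in>insert y R2. z \<le> v} = {z\<in>R2. z \<le> v}" using vy by auto
      have "card {z\<in>R1. z < v} \<le> card {z\<in>insert x (R1 - {y}). z < v}" using fin vy by (intro card_mono) auto
      then show ?thesis unfolding e1 using cs vR by (meson le_trans)
    qed
  qed
  have dis': "insert x (R1 - {y}) \<inter> insert y R2 = {}" using dis xR yY by auto
  show "tab_ok S'" using S S' fin dis' cs' unfolding tab_ok_def by simp
  show "els S' = insert x (els S)" using S S' yY unfolding els_def by auto
  show "allowed D2 (shape S')" using S S' fin unfolding shape_def by (simp add: card_gt_0_iff)
  have m2: "Max (insert y R2) = y" using fin R2y by (simp add: Max_insert2 less_imp_le)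
  have m1: "Max {z\<in>insert x (R1 - {y}). z < y} = x"
  proof -
    have e: "{z\<in>insert x (R1 - {y}). z < y} = insert x {z\<in>R1. z < y}" using yY by auto
    have "\<forall>z\<in>{z\<in>R1. z < y}. z \<le> x" using below by (auto intro: less_imp_le)
    then show ?thesis unfolding e using fin by (intro Max_eqI) auto
  qed
  show "phop t D2 S' = S" using S S' m1 m2 yY xR yR2 by auto
  show "ejct D2 S' = x" using S S' m1 m2 unfolding ejct_def by simp
  have c1: "card R1 > 0" using yY fin card_gt_0_iff by blast
  show "stepsh D2 (shape S') = shape S" using S S' fin xR yY yR2 c1 unfolding shape_def
    by (simp add: card_insert_if)
qed

lemma del_U1:
  assumes ok: "tab_ok S" and tR: "t \<in> fst S" and le: "\<forall>z\<in>els S. z \<le> t"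
    and S': "S' = (fst S - {t}, snd S)"
  shows "tab_ok S'" "els S' = els S - {t}" "allowed U1 (shape S')" "phop t U1 S' = S"
    "stepsh U1 (shape S') = shape S"
proof -
  obtain R1 R2 where S: "S = (R1, R2)" by fastforce
  have fin: "finite R1" "finite R2" and dis: "R1 \<inter> R2 = {}"
    and cs: "\<forall>y\<in>R2. card {z\<in>R2. z \<le> y} \<le> card {z\<in>R1. z < y}" using ok S unfolding tab_ok_def by auto
  have t1: "t \<in> R1" "t \<notin> R2" using tR dis S by auto
  have "\<forall>y\<in>R2. card {z\<in>R2. z \<le> y} \<le> card {z\<in>R1 - {t}. z < y}"
  proof
    fix y assume y: "y \<in> R2"
    have "y \<le> t" using le S y unfolding els_def by auto
    moreover have "y \<noteq> t" using y t1 by auto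
    ultimately have "y < t" by simp
    then have "{z\<in>R1 - {t}. z < y} = {z\<in>R1. z < y}" by auto
    then show "card {z\<in>R2. z \<le> y} \<le> card {z\<in>R1 - {t}. z < y}" using cs y by simp
  qed
  then show "tab_ok S'" using S S' fin dis unfolding tab_ok_def by auto
  show "els S' = els S - {t}" using S S' t1 unfolding els_def by auto
  show "allowed U1 (shape S')" by simp
  show "phop t U1 S' = S" using S S' t1 by auto
  have "card R1 > 0" using t1 fin card_gt_0_iff by blast
  then show "stepsh U1 (shape S') = shape S" using S S' fin t1 unfolding shape_def by simp
qed

lemma del_U2:
  assumes ok: "tab_ok S" and tR: "t \<in> snd S" and le: "\<forall>z\<in>els S. z \<le> t"
    and S': "S' = (fst S, snd S - {t})"
  shows "tab_ok S'" "els S' = els S - {t}" "allowed U2 (shape S')" "phop t U2 S' = S"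
    "stepsh U2 (shape S') = shape S"
proof -
  obtain R1 R2 where S: "S = (R1, R2)" by fastforce
  have fin: "finite R1" "finite R2" and dis: "R1 \<inter> R2 = {}"
    and cs: "\<forall>y\<in>R2. card {z\<in>R2. z \<le> y} \<le> card {z\<in>R1. z < y}" using ok S unfolding tab_ok_def by auto
  have t2: "t \<in> R2" "t \<notin> R1" using tR dis S by auto
  have "\<forall>y\<in>R2 - {t}. card {z\<in>R2 - {t}. z \<le> y} \<le> card {z\<in>R1. z < y}"
  proof
    fix y assume y: "y \<in> R2 - {t}"
    have "card {z\<in>R2 - {t}. z \<le> y} \<le> card {z\<in>R2. z \<le> y}" using fin by (intro card_mono) auto
    then show "card {z\<in>R2 - {t}. z \<le> y} \<le> card {z\<in>R1. z < y}" using cs y by (meson DiffD1 le_trans)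
  qed
  then show "tab_ok S'" using S S' fin dis unfolding tab_ok_def by auto
  show "els S' = els S - {t}" using S S' t2 unfolding els_def by auto
  have "{z\<in>R2. z \<le> t} = R2" using le S unfolding els_def by auto
  then have "card R2 \<le> card {z\<in>R1. z < t}" using cs t2 by metis
  also have "\<dots> \<le> card R1" using fin by (intro card_mono) auto
  finally have c: "card R2 \<le> card R1" .
  have c0: "card R2 > 0" using t2 fin card_gt_0_iff by blast
  show "allowed U2 (shape S')" using S S' fin t2 c c0 unfolding shape_def by simp
  show "phop t U2 S' = S" using S S' t2 by auto
  show "stepsh U2 (shape S') = shape S" using S S' fin t2 c0 unfolding shape_def by simp
qed

lemma rl_ph_D1:
  assumes ok: "tab_ok S" and al: "allowed D1 (shape S)"
  shows "inso (ejct D1 S) (phop t D1 S) = Some S" "\<forall>z\<in>fst (phop t D1 S). z < ejct D1 S"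
proof -
  obtain R1 R2 where S: "S = (R1, R2)" by fastforce
  have fin: "finite R1" using ok S unfolding tab_ok_def by auto
  have "ejct D1 S \<in> fst S" by (rule ph_D1(4)[OF ok al])
  then have m: "Max R1 \<in> R1" using S unfolding ejct_def by simp
  have lt: "\<forall>z\<in>R1 - {Max R1}. z < Max R1" using fin by (metis DiffE Max_ge insertI1 le_neq_implies_less)
  show "\<forall>z\<in>fst (phop t D1 S). z < ejct D1 S" using S lt unfolding ejct_def by simp
  then show "inso (ejct D1 S) (phop t D1 S) = Some S" unfolding inso_def using S m
    by (simp add: ejct_def insert_absorb)
qed

lemma rl_ph_D2:
  assumes ok: "tab_ok S" and al: "allowed D2 (shape S)"
  shows "inso (ejct D2 S) (phop t D2 S) = Some S" "\<not> (\<forall>z\<in>fst (phop t D2 S). z < ejct D2 S)"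
proof -
  obtain R1 R2 where S: "S = (R1, R2)" by fastforce
  have fin: "finite R1" "finite R2" and dis: "R1 \<inter> R2 = {}" using ok S unfolding tab_ok_def by auto
  have ne: "R2 \<noteq> {}" using al S unfolding shape_def by auto
  define y0 where "y0 = Max R2"
  have y0R: "y0 \<in> R2" using fin ne unfolding y0_def by simp
  have y0ge: "\<And>z. z \<in> R2 \<Longrightarrow> z \<le> y0" using fin unfolding y0_def by simp
  define x where "x = ejct D2 S"
  have xe: "x = Max {z\<in>R1. z < y0}" unfolding x_def ejct_def y0_def using S by simp
  have xR1: "x \<in> R1" using ph_D2(4)[OF ok al] unfolding x_def using S by simp
  have finX: "finite {z\<in>R1. z < y0}" using fin by simp
  have neX: "{z\<in>R1. z < y0} \<noteq> {}"
  proof -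
    have cs: "\<forall>y\<in>R2. card {z\<in>R2. z \<le> y} \<le> card {z\<in>R1. z < y}" using ok S unfolding tab_ok_def by auto
    have "{z\<in>R2. z \<le> y0} = R2" using y0ge by auto
    then have "card R2 \<le> card {z\<in>R1. z < y0}" using cs y0R by metis
    moreover have "card R2 > 0" using ne fin by auto
    ultimately have "card {z\<in>R1. z < y0} \<noteq> 0" by linarith
    then show ?thesis by (metis card.empty)
  qed
  have xlt: "x < y0" using Max_in[OF finX neX] xe by simp
  have xge: "\<And>z. z \<in> R1 \<Longrightarrow> z < y0 \<Longrightarrow> z \<le> x" using finX xe by simp
  have y0n: "y0 \<notin> R1" using dis y0R by auto
  have P: "phop t D2 S = (insert y0 (R1 - {x}), R2 - {y0})" using S xe unfolding y0_def by simp
  have nall: "\<not> (\<forall>z\<in>insert y0 (R1 - {x}). z < x)" using xlt by auto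
  then show "\<not> (\<forall>z\<in>fst (phop t D2 S). z < ejct D2 S)" unfolding P x_def[symmetric] by simp
  have mn: "Min {z\<in>insert y0 (R1 - {x}). x < z} = y0"
  proof (rule Min_eqI)
    show "finite {z\<in>insert y0 (R1 - {x}). x < z}" using fin by simp
    show "y0 \<in> {z\<in>insert y0 (R1 - {x}). x < z}" using xlt by simp
    fix z assume "z \<in> {z\<in>insert y0 (R1 - {x}). x < z}"
    then show "y0 \<le> z"
    proof (cases "z = y0")
      case False
      then have z: "z \<in> R1" "x < z" using \<open>z \<in> _\<close> by auto
      show ?thesis
      proof (rule ccontr)
        assume "\<not> y0 \<le> z"
        then have "z \<le> x" using xge z(1) by simp
        then show False using z(2) by simp
      qed
    qed simp
  qed
  have all2: "\<forall>z\<in>R2 - {y0}. z < y0" using y0ge by fastforce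
  show "inso (ejct D2 S) (phop t D2 S) = Some S" unfolding P x_def[symmetric] inso_def
    using nall mn all2 S y0R xR1 y0n xlt by (auto simp: Let_def insert_absorb)
qed


fun wv :: "nat \<times> nat \<Rightarrow> stp list \<Rightarrow> bool" where
  "wv s [] = (s = (0,0))"
| "wv s (x # w) = (allowed x s \<and> wv (stepsh x s) w)"

fun shl :: "nat \<times> nat \<Rightarrow> stp list \<Rightarrow> nat \<times> nat" where
  "shl s [] = s"
| "shl s (x # w) = shl (stepsh x s) w"

lemma shl_append: "shl s (xs @ ys) = shl (shl s xs) ys"
  by (induction xs arbitrary: s) auto

lemma shl_take_Suc: "k < length w \<Longrightarrow> shl s (take (Suc k) w) = stepsh (w!k) (shl s (take k w))"
  by (simp add: take_Suc_conv_app_nth shl_append)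

lemma wv_iff: "wv s w \<longleftrightarrow> (\<forall>k<length w. allowed (w!k) (shl s (take k w))) \<and> shl s w = (0,0)"
proof (induction w arbitrary: s)
  case Nil then show ?case by simp
next
  case (Cons x w)
  have "(\<forall>k<length (x#w). allowed ((x#w)!k) (shl s (take k (x#w))))
      \<longleftrightarrow> allowed x s \<and> (\<forall>k<length w. allowed (w!k) (shl (stepsh x s) (take k w)))"
    (is "?L \<longleftrightarrow> ?R")
  proof
    assume L: ?L
    have "allowed x s" using L[rule_format, of 0] by simp
    moreover have "\<forall>k<length w. allowed (w!k) (shl (stepsh x s) (take k w))"
    proof (intro allI impI)
      fix k assume "k < length w"
      then show "allowed (w!k) (shl (stepsh x s) (take k w))" using L[rule_format, of "Suc k"] by simp
    qed
    ultimately show ?R by simp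
  next
    assume R: ?R
    show ?L
    proof (intro allI impI)
      fix k assume k: "k < length (x#w)"
      show "allowed ((x#w)!k) (shl s (take k (x#w)))"
      proof (cases k)
        case 0 then show ?thesis using R by simp
      next
        case (Suc k') then show ?thesis using R k by simp
      qed
    qed
  qed
  then show ?case using Cons.IH[of "stepsh x s"] by auto
qed

fun phst :: "stp list \<Rightarrow> nat \<Rightarrow> tb" where
  "phst w 0 = ({}, {})"
| "phst w (Suc k) = phop (Suc k) (w!k) (phst w k)"

definition isD :: "stp \<Rightarrow> bool" where "isD s \<longleftrightarrow> s = D1 \<or> s = D2"
definition isU :: "stp \<Rightarrow> bool" where "isU s \<longleftrightarrow> s = U1 \<or> s = U2"

definition ej :: "stp list \<Rightarrow> nat \<Rightarrow> nat" where "ej w t = ejct (w!(t - 1)) (phst w (t - 1))"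

lemma ph_inv:
  assumes v: "wv (0,0) w" and k: "k \<le> length w"
  shows "tab_ok (phst w k) \<and> shape (phst w k) = shl (0,0) (take k w) \<and> els (phst w k) \<subseteq> {1..k}"
  using k
proof (induction k)
  case 0 then show ?case unfolding tab_ok_def shape_def els_def by simp
next
  case (Suc k)
  then have IH: "tab_ok (phst w k)" "shape (phst w k) = shl (0,0) (take k w)" "els (phst w k) \<subseteq> {1..k}"
    and kl: "k < length w" by auto
  have al: "allowed (w!k) (shape (phst w k))" using v kl IH(2) unfolding wv_iff by simp
  have lt: "\<forall>x\<in>els (phst w k). x < Suc k" using IH(3) by auto
  have sh: "shl (0,0) (take (Suc k) w) = stepsh (w!k) (shape (phst w k))" using shl_take_Suc[OF kl] IH(2) by simp
  show ?case
  proof (cases "w!k")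
    case Stay then show ?thesis using IH sh by auto
  next
    case U1 then show ?thesis using ph_U1[OF IH(1) lt] IH sh by auto
  next
    case U2 then show ?thesis using ph_U2[OF IH(1) lt] al IH sh by auto
  next
    case D1 then show ?thesis using ph_D1[OF IH(1)] al IH sh by auto
  next
    case D2 then show ?thesis using ph_D2[OF IH(1)] al IH sh by auto
  qed
qed

lemma ph_step_els:
  assumes v: "wv (0,0) w" and k: "k < length w"
  shows "els (phst w (Suc k)) = (if isU (w!k) then insert (Suc k) (els (phst w k))
            else if isD (w!k) then els (phst w k) - {ej w (Suc k)} else els (phst w k))"
    "isD (w!k) \<Longrightarrow> ej w (Suc k) \<in> fst (phst w k)"
proof -
  have I: "tab_ok (phst w k)" "shape (phst w k) = shl (0,0) (take k w)" "els (phst w k) \<subseteq> {1..k}"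
    using ph_inv[OF v, of k] k by auto
  have al: "allowed (w!k) (shape (phst w k))" using v k I(2) unfolding wv_iff by simp
  have lt: "\<forall>x\<in>els (phst w k). x < Suc k" using I(3) by auto
  show "els (phst w (Suc k)) = (if isU (w!k) then insert (Suc k) (els (phst w k))
            else if isD (w!k) then els (phst w k) - {ej w (Suc k)} else els (phst w k))"
    by (cases "w!k") (use ph_U1[OF I(1) lt] ph_U2[OF I(1) lt] ph_D1[OF I(1)] ph_D2[OF I(1)] al in
        \<open>auto simp: isU_def isD_def ej_def\<close>)
  show "isD (w!k) \<Longrightarrow> ej w (Suc k) \<in> fst (phst w k)"
    by (cases "w!k") (use ph_D1[OF I(1)] ph_D2[OF I(1)] al in \<open>auto simp: isD_def ej_def\<close>)
qed

lemma E_char: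
  assumes v: "wv (0,0) w" and k: "k \<le> length w"
  shows "x \<in> els (phst w k) \<longleftrightarrow>
    (1 \<le> x \<and> x \<le> k \<and> isU (w!(x-1)) \<and> \<not> (\<exists>t. 1 \<le> t \<and> t \<le> k \<and> isD (w!(t-1)) \<and> ej w t = x))"
  using k
proof (induction k)
  case 0 then show ?case unfolding els_def by simp
next
  case (Suc k)
  then have kl: "k < length w" by simp
  have IH: "x \<in> els (phst w k) \<longleftrightarrow>
    (1 \<le> x \<and> x \<le> k \<and> isU (w!(x-1)) \<and> \<not> (\<exists>t. 1 \<le> t \<and> t \<le> k \<and> isD (w!(t-1)) \<and> ej w t = x))"
    using Suc by simp
  have sub: "els (phst w k) \<subseteq> {1..k}" using ph_inv[OF v, of k] kl by simp
  note E = ph_step_els[OF v kl]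
  have UD: "\<not> (isU s \<and> isD s)" for s by (cases s) (auto simp: isU_def isD_def)
  show ?case
  proof (cases "isU (w!k)")
    case True
    then have nd: "\<not> isD (w!k)" using UD by blast
    have "x \<in> els (phst w (Suc k)) \<longleftrightarrow> x = Suc k \<or> x \<in> els (phst w k)" using E(1) True by simp
    also have "\<dots> \<longleftrightarrow> (1 \<le> x \<and> x \<le> Suc k \<and> isU (w!(x-1)) \<and>
        \<not> (\<exists>t. 1 \<le> t \<and> t \<le> Suc k \<and> isD (w!(t-1)) \<and> ej w t = x))"
    proof
      assume "x = Suc k \<or> x \<in> els (phst w k)"
      then show "1 \<le> x \<and> x \<le> Suc k \<and> isU (w!(x-1)) \<and>
        \<not> (\<exists>t. 1 \<le> t \<and> t \<le> Suc k \<and> isD (w!(t-1)) \<and> ej w t = x)"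
      proof
        assume x: "x = Suc k"
        have "\<not> (\<exists>t. 1 \<le> t \<and> t \<le> Suc k \<and> isD (w!(t-1)) \<and> ej w t = x)"
        proof
          assume "\<exists>t. 1 \<le> t \<and> t \<le> Suc k \<and> isD (w!(t-1)) \<and> ej w t = x"
          then obtain t where t: "1 \<le> t" "t \<le> Suc k" "isD (w!(t-1))" "ej w t = x" by blast
          have "t \<noteq> Suc k" using t(3) nd by auto
          then have tk: "t - 1 < k" using t by simp
          have tl: "t - 1 < length w" using tk kl by simp
          have "ej w t \<in> fst (phst w (t-1))" using ph_step_els(2)[OF v tl] t(1,3) by simp
          then have "ej w t \<in> els (phst w (t-1))" unfolding els_def by simp
          moreover have "els (phst w (t-1)) \<subseteq> {1..t-1}" using ph_inv[OF v, of "t-1"] tl by simp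
          ultimately show False using t(4) x tk by auto
        qed
        then show ?thesis using x True by simp
      next
        assume "x \<in> els (phst w k)"
        then show ?thesis using IH nd by (auto simp: le_Suc_eq)
      qed
    next
      assume R: "1 \<le> x \<and> x \<le> Suc k \<and> isU (w!(x-1)) \<and>
        \<not> (\<exists>t. 1 \<le> t \<and> t \<le> Suc k \<and> isD (w!(t-1)) \<and> ej w t = x)"
      show "x = Suc k \<or> x \<in> els (phst w k)"
      proof (cases "x = Suc k")
        case False
        then show ?thesis using R IH by auto
      qed simp
    qed
    finally show ?thesis .
  next
    case False
    note nU = False
    show ?thesis
    proof (cases "isD (w!k)")
      case True
      have "x \<in> els (phst w (Suc k)) \<longleftrightarrow> x \<in> els (phst w k) \<and> x \<noteq> ej w (Suc k)" using E(1) True nU by simp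
      also have "\<dots> \<longleftrightarrow> (1 \<le> x \<and> x \<le> Suc k \<and> isU (w!(x-1)) \<and>
        \<not> (\<exists>t. 1 \<le> t \<and> t \<le> Suc k \<and> isD (w!(t-1)) \<and> ej w t = x))"
      proof
        assume L: "x \<in> els (phst w k) \<and> x \<noteq> ej w (Suc k)"
        then show "1 \<le> x \<and> x \<le> Suc k \<and> isU (w!(x-1)) \<and>
          \<not> (\<exists>t. 1 \<le> t \<and> t \<le> Suc k \<and> isD (w!(t-1)) \<and> ej w t = x)"
          using IH by (auto simp: le_Suc_eq)
      next
        assume R: "1 \<le> x \<and> x \<le> Suc k \<and> isU (w!(x-1)) \<and>
          \<not> (\<exists>t. 1 \<le> t \<and> t \<le> Suc k \<and> isD (w!(t-1)) \<and> ej w t = x)"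
        have D: "isD (w!(Suc k - 1))" using True by simp
        have ne: "x \<noteq> ej w (Suc k)"
        proof
          assume "x = ej w (Suc k)"
          then have "1 \<le> Suc k \<and> Suc k \<le> Suc k \<and> isD (w!(Suc k-1)) \<and> ej w (Suc k) = x" using D by simp
          then show False using R by blast
        qed
        have "x \<noteq> Suc k" using R nU by auto
        then have "x \<le> k" using R by simp
        then have "x \<in> els (phst w k)" using IH R by auto
        then show "x \<in> els (phst w k) \<and> x \<noteq> ej w (Suc k)" using ne by simp
      qed
      finally show ?thesis .
    next
      case False
      have "x \<in> els (phst w (Suc k)) \<longleftrightarrow> x \<in> els (phst w k)" using E(1) False nU by simp
      also have "\<dots> \<longleftrightarrow> (1 \<le> x \<and> x \<le> Suc k \<and> isU (w!(x-1)) \<and>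
        \<not> (\<exists>t. 1 \<le> t \<and> t \<le> Suc k \<and> isD (w!(t-1)) \<and> ej w t = x))"
        using IH nU False by (auto simp: le_Suc_eq)
      finally show ?thesis .
    qed
  qed
qed

definition phA :: "stp list \<Rightarrow> (nat \<times> nat) set" where
  "phA w = {(ej w t, t) | t. 1 \<le> t \<and> t \<le> length w \<and> isD (w!(t-1))}"

lemma phA_mem:
  assumes v: "wv (0,0) w" and xt: "(x,t) \<in> phA w"
  shows "1 \<le> x" "x < t" "t \<le> length w" "isD (w!(t-1))" "isU (w!(x-1))" "x = ej w t"
proof -
  have t: "1 \<le> t" "t \<le> length w" "isD (w!(t-1))" "x = ej w t" using xt unfolding phA_def by auto
  then have tl: "t - 1 < length w" by simp
  have "ej w t \<in> fst (phst w (t-1))" using ph_step_els(2)[OF v tl] t by simp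
  then have xe: "x \<in> els (phst w (t-1))" using t unfolding els_def by simp
  have "t - 1 \<le> length w" using tl by simp
  from E_char[OF v this, of x] xe
  show "1 \<le> x" "x < t" "isU (w!(x-1))" using t by auto
  show "t \<le> length w" "isD (w!(t-1))" "x = ej w t" using t by auto
qed

lemma UD_excl: "isU s \<Longrightarrow> \<not> isD s" by (cases s) (auto simp: isU_def isD_def)

lemma phA_inj:
  assumes v: "wv (0,0) w" and a: "(x,t) \<in> phA w" and b: "(x,t') \<in> phA w"
  shows "t = t'"
proof (rule ccontr)
  assume ne: "t \<noteq> t'"
  have A: "1 \<le> t" "t \<le> length w" "isD (w!(t-1))" "x = ej w t" using phA_mem[OF v a] by auto
  have B: "1 \<le> t'" "t' \<le> length w" "isD (w!(t'-1))" "x = ej w t'" using phA_mem[OF v b] by auto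
  have "\<And>t t'. (x,t) \<in> phA w \<Longrightarrow> (x,t') \<in> phA w \<Longrightarrow> t < t' \<Longrightarrow> False"
  proof -
    fix t t' assume a: "(x,t) \<in> phA w" and b: "(x,t') \<in> phA w" and lt: "t < t'"
    have A: "1 \<le> t" "isD (w!(t-1))" "x = ej w t" using phA_mem[OF v a] by auto
    have B: "1 \<le> t'" "t' \<le> length w" "isD (w!(t'-1))" "x = ej w t'" using phA_mem[OF v b] by auto
    have tl: "t' - 1 < length w" using B by simp
    have "ej w t' \<in> fst (phst w (t'-1))" using ph_step_els(2)[OF v tl] B by simp
    then have "x \<in> els (phst w (t'-1))" using B unfolding els_def by simp
    moreover have "t' - 1 \<le> length w" using tl by simp
    ultimately show False using E_char[OF v \<open>t' - 1 \<le> length w\<close>, of x] A lt by auto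
  qed
  then show False using ne a b by (metis linorder_neqE_nat)
qed

lemma phA_final_empty:
  assumes v: "wv (0,0) w"
  shows "phst w (length w) = ({}, {})"
proof -
  have I: "tab_ok (phst w (length w))" "shape (phst w (length w)) = shl (0,0) w"
    using ph_inv[OF v, of "length w"] by auto
  have "shl (0,0) w = (0,0)" using v unfolding wv_iff by simp
  then have "card (fst (phst w (length w))) = 0" "card (snd (phst w (length w))) = 0"
    using I(2) unfolding shape_def by auto
  moreover have "finite (fst (phst w (length w)))" "finite (snd (phst w (length w)))"
    using I(1) unfolding tab_ok_def by auto
  ultimately show ?thesis by (metis card_0_eq prod.collapse)
qed

lemma phA_partner:
  assumes v: "wv (0,0) w" and x: "1 \<le> x" "x \<le> length w" "isU (w!(x-1))"
  shows "\<exists>t. (x,t) \<in> phA w"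
proof -
  have "x \<notin> els (phst w (length w))" using phA_final_empty[OF v] unfolding els_def by simp
  then obtain t where t: "1 \<le> t" "t \<le> length w" "isD (w!(t-1))" "ej w t = x"
    using E_char[OF v order.refl, of x] x by auto
  then show ?thesis unfolding phA_def by blast
qed

lemma phA_present:
  assumes v: "wv (0,0) w" and k: "k \<le> length w"
  shows "els (phst w k) = {x. \<exists>j. (x,j) \<in> phA w \<and> x \<le> k \<and> k < j}"
proof (intro set_eqI iffI)
  fix x assume x: "x \<in> els (phst w k)"
  then have X: "1 \<le> x" "x \<le> k" "isU (w!(x-1))"
    "\<not> (\<exists>t. 1 \<le> t \<and> t \<le> k \<and> isD (w!(t-1)) \<and> ej w t = x)" using E_char[OF v k] by auto
  obtain t where t: "(x,t) \<in> phA w" using phA_partner[OF v X(1)] X k by auto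
  have "k < t" using phA_mem[OF v t] X(4) by auto
  then show "x \<in> {x. \<exists>j. (x,j) \<in> phA w \<and> x \<le> k \<and> k < j}" using t X by auto
next
  fix x assume "x \<in> {x. \<exists>j. (x,j) \<in> phA w \<and> x \<le> k \<and> k < j}"
  then obtain j where j: "(x,j) \<in> phA w" "x \<le> k" "k < j" by auto
  have J: "1 \<le> x" "isU (w!(x-1))" using phA_mem[OF v j(1)] by auto
  have "\<not> (\<exists>t. 1 \<le> t \<and> t \<le> k \<and> isD (w!(t-1)) \<and> ej w t = x)"
  proof
    assume "\<exists>t. 1 \<le> t \<and> t \<le> k \<and> isD (w!(t-1)) \<and> ej w t = x"
    then obtain t where t: "1 \<le> t" "t \<le> k" "isD (w!(t-1))" "ej w t = x" by auto
    have "t \<le> length w" using t k by simp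
    then have "(x,t) \<in> phA w" using t unfolding phA_def by auto
    then have "t = j" using phA_inj[OF v _ j(1)] by simp
    then show False using t j by simp
  qed
  then show "x \<in> els (phst w k)" using E_char[OF v k] J j by auto
qed


fun rlst :: "(nat \<times> nat) set \<Rightarrow> nat \<Rightarrow> nat \<Rightarrow> tb option" where
  "rlst A n 0 = Some ({}, {})"
| "rlst A n (Suc k) = (case rlst A n k of None \<Rightarrow> None | Some S \<Rightarrow> rlop A (n - k) S)"

definition cst :: "(nat \<times> nat) set \<Rightarrow> nat \<Rightarrow> nat \<Rightarrow> tb option" where
  "cst A n t = rlst A n (n - t)"

lemma cst_step: "t < n \<Longrightarrow> cst A n t = (case cst A n (Suc t) of None \<Rightarrow> None | Some S \<Rightarrow> rlop A (Suc t) S)"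
proof -
  assume tn: "t < n"
  have e: "n - t = Suc (n - Suc t)" using tn by simp
  have e2: "n - (n - Suc t) = Suc t" using tn by simp
  show ?thesis unfolding cst_def e rlst.simps(2) e2 by simp
qed

lemma cst_top: "cst A n n = Some ({}, {})" unfolding cst_def by simp

definition Psi :: "(nat \<times> nat) set \<Rightarrow> nat \<Rightarrow> stp list" where
  "Psi A n = map (\<lambda>t. rllet A t (the (cst A n t))) [1..<Suc n]"

lemma length_Psi: "length (Psi A n) = n" unfolding Psi_def by simp

lemma nth_Psi: "i < n \<Longrightarrow> Psi A n ! i = rllet A (Suc i) (the (cst A n (Suc i)))"
  unfolding Psi_def by (simp add: nth_map_upt del: upt_Suc)

lemma ph_rl_step:
  assumes v: "wv (0,0) w" and k: "k < length w"
  shows "rlop (phA w) (Suc k) (phst w (Suc k)) = Some (phst w k)"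
    "rllet (phA w) (Suc k) (phst w (Suc k)) = w!k"
proof -
  define M where "M = phA w"
  define S where "S = phst w k"
  have I: "tab_ok S" "shape S = shl (0,0) (take k w)" "els S \<subseteq> {1..k}"
    using ph_inv[OF v, of k] k unfolding S_def by auto
  have al: "allowed (w!k) (shape S)" using v k I(2) unfolding wv_iff by simp
  have P: "phst w (Suc k) = phop (Suc k) (w!k) S" unfolding S_def by simp
  have D_iff: "(\<exists>x. (x, Suc k) \<in> M) \<longleftrightarrow> isD (w!k)"
  proof
    assume "\<exists>x. (x, Suc k) \<in> M"
    then show "isD (w!k)" using phA_mem(4)[OF v] unfolding M_def by fastforce
  next
    assume "isD (w!k)"
    then have "(ej w (Suc k), Suc k) \<in> M" unfolding M_def phA_def using k by auto
    then show "\<exists>x. (x, Suc k) \<in> M" by blast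
  qed
  have THE: "isD (w!k) \<Longrightarrow> (THE x. (x, Suc k) \<in> M) = ej w (Suc k)"
  proof -
    assume d: "isD (w!k)"
    have m: "(ej w (Suc k), Suc k) \<in> M" unfolding M_def phA_def using k d by auto
    show ?thesis
    proof (rule the_equality)
      show "(ej w (Suc k), Suc k) \<in> M" by (rule m)
      fix x assume "(x, Suc k) \<in> M"
      then show "x = ej w (Suc k)" using phA_mem(6)[OF v] unfolding M_def by blast
    qed
  qed
  have U_iff: "(\<exists>j. (Suc k, j) \<in> M) \<longleftrightarrow> isU (w!k)"
  proof
    assume "\<exists>j. (Suc k, j) \<in> M"
    then show "isU (w!k)" using phA_mem(5)[OF v] unfolding M_def by fastforce
  next
    assume "isU (w!k)"
    then show "\<exists>j. (Suc k, j) \<in> M" using phA_partner[OF v, of "Suc k"] k unfolding M_def by simp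
  qed
  have ejS: "ej w (Suc k) = ejct (w!k) S" unfolding ej_def S_def by simp
  have tS: "Suc k \<notin> fst S" "Suc k \<notin> snd S" using I(3) unfolding els_def by auto
  have "rlop M (Suc k) (phst w (Suc k)) = Some S \<and> rllet M (Suc k) (phst w (Suc k)) = w!k"
  proof (cases "w!k")
    case Stay
    have "\<not> (\<exists>x. (x, Suc k) \<in> M)" "\<not> (\<exists>j. (Suc k, j) \<in> M)" using D_iff U_iff Stay
      by (auto simp: isD_def isU_def)
    then show ?thesis unfolding P rlop_def rllet_def using Stay by simp
  next
    case U1
    have "\<not> (\<exists>x. (x, Suc k) \<in> M)" "\<exists>j. (Suc k, j) \<in> M" using D_iff U_iff U1
      by (auto simp: isD_def isU_def)
    then show ?thesis unfolding P rlop_def rllet_def using U1 tS by (simp add: insert_absorb)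
  next
    case U2
    have "\<not> (\<exists>x. (x, Suc k) \<in> M)" "\<exists>j. (Suc k, j) \<in> M" using D_iff U_iff U2
      by (auto simp: isD_def isU_def)
    then show ?thesis unfolding P rlop_def rllet_def using U2 tS by (simp add: insert_absorb)
  next
    case D1
    have "\<exists>x. (x, Suc k) \<in> M" "(THE x. (x, Suc k) \<in> M) = ejct D1 S" using D_iff THE D1 ejS
      by (auto simp: isD_def)
    then show ?thesis unfolding P rlop_def rllet_def using D1 rl_ph_D1[OF I(1)] al by simp
  next
    case D2
    have "\<exists>x. (x, Suc k) \<in> M" "(THE x. (x, Suc k) \<in> M) = ejct D2 S" using D_iff THE D2 ejS
      by (auto simp: isD_def)
    then show ?thesis unfolding P rlop_def rllet_def using D2 rl_ph_D2[OF I(1)] al by simp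
  qed
  then show "rlop (phA w) (Suc k) (phst w (Suc k)) = Some (phst w k)"
    "rllet (phA w) (Suc k) (phst w (Suc k)) = w!k" unfolding M_def S_def by auto
qed

lemma cst_phst:
  assumes v: "wv (0,0) w" and t: "t \<le> length w"
  shows "cst (phA w) (length w) t = Some (phst w t)"
proof -
  have "\<forall>t. length w - t = d \<longrightarrow> t \<le> length w \<longrightarrow> cst (phA w) (length w) t = Some (phst w t)" for d
  proof (induction d)
    case 0
    show ?case
    proof (intro allI impI)
      fix t assume "length w - t = 0" "t \<le> length w"
      then have "t = length w" by simp
      then show "cst (phA w) (length w) t = Some (phst w t)" using cst_top phA_final_empty[OF v] by simp
    qed
  next
    case (Suc d)
    show ?case
    proof (intro allI impI)
      fix t assume d: "length w - t = Suc d" and "t \<le> length w"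
      then have tl: "t < length w" by simp
      have "cst (phA w) (length w) (Suc t) = Some (phst w (Suc t))" using Suc d tl by simp
      then show "cst (phA w) (length w) t = Some (phst w t)"
        using cst_step[OF tl] ph_rl_step(1)[OF v tl] by simp
    qed
  qed
  then show ?thesis using t by simp
qed

lemma Psi_phA:
  assumes v: "wv (0,0) w"
  shows "Psi (phA w) (length w) = w"
proof (rule nth_equalityI)
  show "length (Psi (phA w) (length w)) = length w" by (rule length_Psi)
  fix i assume "i < length (Psi (phA w) (length w))"
  then have i: "i < length w" by (simp add: length_Psi)
  have "Psi (phA w) (length w) ! i = rllet (phA w) (Suc i) (the (cst (phA w) (length w) (Suc i)))"
    using nth_Psi i by simp
  also have "\<dots> = rllet (phA w) (Suc i) (phst w (Suc i))" using cst_phst[OF v, of "Suc i"] i by simp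
  also have "\<dots> = w!i" using ph_rl_step(2)[OF v i] .
  finally show "Psi (phA w) (length w) ! i = w ! i" .
qed


definition present :: "(nat \<times> nat) set \<Rightarrow> nat \<Rightarrow> nat set" where
  "present A t = {x. \<exists>j. (x,j) \<in> A \<and> x \<le> t \<and> t < j}"

definition I3 :: "(nat \<times> nat) set \<Rightarrow> nat \<Rightarrow> tb \<Rightarrow> bool" where
  "I3 A t S \<longleftrightarrow> (\<forall>y2\<in>snd S. \<exists>j2 b jb. (y2,j2) \<in> A \<and> (b,jb) \<in> A \<and> t < jb \<and> jb < j2 \<and> b < y2 \<and>
       (\<forall>y\<in>fst S. y < y2 \<longrightarrow> y \<le> b))"

definition nocross :: "(nat \<times> nat) set \<Rightarrow> bool" where
  "nocross A \<longleftrightarrow> \<not> (\<exists>i1 j1 i2 j2 i3 j3. (i1,j1)\<in>A \<and> (i2,j2)\<in>A \<and> (i3,j3)\<in>A \<and>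
            i1 < i2 \<and> i2 < i3 \<and> i3 < j1 \<and> j1 < j2 \<and> j2 < j3)"

definition vdisj :: "(nat \<times> nat) set \<Rightarrow> bool" where
  "vdisj A \<longleftrightarrow> (\<forall>v. \<forall>a\<in>A. \<forall>b\<in>A. in_arc v a \<and> in_arc v b \<longrightarrow> a = b)"

lemma vd1: "vdisj A \<Longrightarrow> (x,t) \<in> A \<Longrightarrow> (x',t) \<in> A \<Longrightarrow> x = x'"
  unfolding vdisj_def in_arc_def by force
lemma vd2: "vdisj A \<Longrightarrow> (x,t) \<in> A \<Longrightarrow> (t,j) \<in> A \<Longrightarrow> x < t \<Longrightarrow> False"
  unfolding vdisj_def in_arc_def by force
lemma vd3: "vdisj A \<Longrightarrow> (x,j) \<in> A \<Longrightarrow> (x,j') \<in> A \<Longrightarrow> j = j'"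
  unfolding vdisj_def in_arc_def by force

locale arcs =
  fixes A :: "(nat \<times> nat) set" and n :: nat
  assumes dg: "\<And>i j. (i,j) \<in> A \<Longrightarrow> 1 \<le> i \<and> i < j \<and> j \<le> n"
    and vd: "vdisj A"
begin

lemma step_right:
  assumes u: "1 \<le> u" "u \<le> n" and ok: "tab_ok S" and E: "els S = present A u" and I: "I3 A u S"
    and xu: "(x,u) \<in> A" and nc: "nocross A"
  shows "\<exists>S'. rlop A u S = Some S' \<and> tab_ok S' \<and> els S' = present A (u - 1) \<and> I3 A (u - 1) S' \<and>
     allowed (rllet A u S) (shape S') \<and> phop u (rllet A u S) S' = S \<and>
     stepsh (rllet A u S) (shape S') = shape S \<and> isD (rllet A u S) \<and> ejct (rllet A u S) S' = x"
proof -
  have THE: "(THE x. (x,u) \<in> A) = x"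
  proof (rule the_equality)
    show "(x,u) \<in> A" by (rule xu)
    fix y assume "(y,u) \<in> A" then show "y = x" using vd1[OF vd xu, of y] by simp
  qed
  have ex: "\<exists>x. (x,u) \<in> A" using xu by blast
  have xlt: "x < u" using dg[OF xu] by simp
  have xn: "x \<notin> els S"
  proof
    assume "x \<in> els S"
    then obtain j where "(x,j) \<in> A" "u < j" using E unfolding present_def by auto
    then show False using vd3[OF vd xu] by fastforce
  qed
  have pres: "present A (u - 1) = insert x (present A u)"
  proof (intro set_eqI iffI)
    fix y assume "y \<in> present A (u - 1)"
    then obtain j where j: "(y,j) \<in> A" "y \<le> u - 1" "u - 1 < j" unfolding present_def by auto
    show "y \<in> insert x (present A u)"
    proof (cases "j = u")
      case True then show ?thesis using vd1[OF vd xu] j by auto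
    next
      case False then show ?thesis using j unfolding present_def by auto
    qed
  next
    fix y assume "y \<in> insert x (present A u)"
    then show "y \<in> present A (u - 1)"
    proof
      assume "y = x" then show ?thesis using xu xlt unfolding present_def by auto
    next
      assume "y \<in> present A u"
      then obtain j where j: "(y,j) \<in> A" "y \<le> u" "u < j" unfolding present_def by auto
      have "y \<noteq> u" using vd2[OF vd xu] j xlt by blast
      then show ?thesis using j unfolding present_def by auto
    qed
  qed
  obtain R1 R2 where S: "S = (R1, R2)" by fastforce
  have fin: "finite R1" "finite R2" and dis: "R1 \<inter> R2 = {}" using ok S unfolding tab_ok_def by auto
  have partner: "\<And>y. y \<in> R1 \<union> R2 \<Longrightarrow> \<exists>j. (y,j) \<in> A \<and> y \<le> u \<and> u < j"
    using E S unfolding els_def present_def by auto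
  show ?thesis
  proof (cases "\<forall>z\<in>R1. z < x")
    case True
    define S' where "S' = (insert x (fst S), snd S)"
    have all: "\<forall>z\<in>fst S. z < x" using True S by simp
    note D = ins_D1(1,2,3)[OF ok xn all S'_def] ins_D1(4)[OF ok xn all S'_def, of u]
      ins_D1(5,6)[OF ok xn all S'_def]
    have rl: "rlop A u S = Some S'" unfolding rlop_def inso_def using ex THE all S'_def by simp
    have let1: "rllet A u S = D1" unfolding rllet_def using ex THE all by simp
    have I3': "I3 A (u - 1) S'"
      unfolding I3_def
    proof
      fix y2 assume y2: "y2 \<in> snd S'"
      then have y2R: "y2 \<in> R2" using S S'_def by simp
      obtain j2 b jb where W: "(y2,j2) \<in> A" "(b,jb) \<in> A" "u < jb" "jb < j2" "b < y2"
        "\<forall>y\<in>R1. y < y2 \<longrightarrow> y \<le> b" using I y2R S unfolding I3_def by fastforce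
      show "\<exists>j2 b jb. (y2,j2) \<in> A \<and> (b,jb) \<in> A \<and> u - 1 < jb \<and> jb < j2 \<and> b < y2 \<and>
          (\<forall>y\<in>fst S'. y < y2 \<longrightarrow> y \<le> b)"
      proof (cases "x < y2")
        case True
        have "\<forall>y\<in>fst S'. y < y2 \<longrightarrow> y \<le> x" using S S'_def all by (auto intro: less_imp_le)
        then show ?thesis using W xu True u by (intro exI[of _ j2] exI[of _ x] exI[of _ u]) auto
      next
        case False
        have "\<forall>y\<in>fst S'. y < y2 \<longrightarrow> y \<le> b" using S S'_def W(6) False by auto
        then show ?thesis using W by (intro exI[of _ j2] exI[of _ b] exI[of _ jb]) auto
      qed
    qed
    show ?thesis using rl D(1,3,4,5,6) all D(2) pres E I3' unfolding let1 isD_def by (intro exI[of _ S']) auto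
  next
    case False
    then have nall: "\<not> (\<forall>z\<in>fst S. z < x)" using S by simp
    define y where "y = Min {z\<in>fst S. x < z}"
    have neY: "{z\<in>R1. x < z} \<noteq> {}" using False xn S unfolding els_def by (auto simp: not_less order.order_iff_strict)
    have yY: "y \<in> R1" "x < y" using Min_in[OF _ neY] fin S unfolding y_def by auto
    have ymin: "\<And>z. z \<in> R1 \<Longrightarrow> x < z \<Longrightarrow> y \<le> z" using fin S unfolding y_def by simp
    show ?thesis
    proof (cases "\<forall>z\<in>snd S. z < y")
      case True
      define S' where "S' = (insert x (fst S - {y}), insert y (snd S))"
      note D = ins_D2(1,2,3)[OF ok xn nall y_def True S'_def] ins_D2(4)[OF ok xn nall y_def True S'_def, of u]
        ins_D2(5,6)[OF ok xn nall y_def True S'_def]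
      have rl: "rlop A u S = Some S'"
      proof -
        have c1: "(\<forall>z\<in>fst S. z < x) = False" using nall by simp
        show ?thesis unfolding rlop_def inso_def using ex THE True S'_def
          by (simp only: c1 if_False if_True Let_def y_def[symmetric]) simp
      qed
      have let2: "rllet A u S = D2" unfolding rllet_def using ex THE nall by simp
      have below: "\<And>z. z \<in> R1 \<Longrightarrow> z < y \<Longrightarrow> z < x"
      proof -
        fix z assume z: "z \<in> R1" "z < y"
        have "\<not> x < z" using ymin[OF z(1)] z(2) by auto
        moreover have "z \<noteq> x" using z xn S unfolding els_def by auto
        ultimately show "z < x" by simp
      qed
      have R2y: "\<forall>z\<in>R2. z < y" using True S by simp
      have I3': "I3 A (u - 1) S'"
        unfolding I3_def
      proof
        fix y2 assume y2: "y2 \<in> snd S'"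
        show "\<exists>j2 b jb. (y2,j2) \<in> A \<and> (b,jb) \<in> A \<and> u - 1 < jb \<and> jb < j2 \<and> b < y2 \<and>
          (\<forall>y\<in>fst S'. y < y2 \<longrightarrow> y \<le> b)"
        proof (cases "y2 = y")
          case True
          obtain jy where jy: "(y,jy) \<in> A" "u < jy" using partner[of y] yY by auto
          have "\<forall>y'\<in>fst S'. y' < y2 \<longrightarrow> y' \<le> x" using S S'_def True below by (auto intro: less_imp_le)
          then show ?thesis using jy xu True yY u by (intro exI[of _ jy] exI[of _ x] exI[of _ u]) auto
        next
          case False
          then have y2R: "y2 \<in> R2" using y2 S S'_def by simp
          then have y2y: "y2 < y" using R2y by simp
          obtain j2 b jb where W: "(y2,j2) \<in> A" "(b,jb) \<in> A" "u < jb" "jb < j2" "b < y2"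
            "\<forall>y\<in>R1. y < y2 \<longrightarrow> y \<le> b" using I y2R S unfolding I3_def by fastforce
          show ?thesis
          proof (cases "x < y2")
            case True
            have "\<forall>y'\<in>fst S'. y' < y2 \<longrightarrow> y' \<le> x" using S S'_def below y2y by (auto intro: less_imp_le)
            then show ?thesis using W xu True u by (intro exI[of _ j2] exI[of _ x] exI[of _ u]) auto
          next
            case False
            have "\<forall>y'\<in>fst S'. y' < y2 \<longrightarrow> y' \<le> b" using S S'_def W(6) False by auto
            then show ?thesis using W by (intro exI[of _ j2] exI[of _ b] exI[of _ jb]) auto
          qed
        qed
      qed
      show ?thesis using rl D(1,3,4,5,6) D(2) pres E I3' unfolding let2 isD_def by (intro exI[of _ S']) auto
    next
      case False
      then obtain q where q: "q \<in> R2" "\<not> q < y" using S by auto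
      have "q \<noteq> y" using q(1) yY(1) dis by auto
      then have qy: "y < q" using q(2) by simp
      obtain j2 b jb where W: "(q,j2) \<in> A" "(b,jb) \<in> A" "u < jb" "jb < j2" "b < q"
        "\<forall>y\<in>R1. y < q \<longrightarrow> y \<le> b" using I q(1) S unfolding I3_def by fastforce
      have yb: "y \<le> b" using W(6) yY(1) qy by simp
      obtain jq where jq: "(q,jq) \<in> A" "q \<le> u" "u < jq" using partner[of q] q by auto
      have "q \<noteq> u" using vd2[OF vd xu] jq xlt by blast
      then have qu: "q < u" using jq by simp
      have "(x,u) \<in> A \<and> (b,jb) \<in> A \<and> (q,j2) \<in> A \<and> x < b \<and> b < q \<and> q < u \<and> u < jb \<and> jb < j2"
        using xu W yY(2) yb qu by auto
      then show ?thesis using nc unfolding nocross_def by blast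
    qed
  qed
qed

end


context arcs
begin

lemma step_left:
  assumes u: "1 \<le> u" "u \<le> n" and ok: "tab_ok S" and E: "els S = present A u" and I: "I3 A u S"
    and uj: "(u,j) \<in> A"
  shows "\<exists>S'. rlop A u S = Some S' \<and> tab_ok S' \<and> els S' = present A (u - 1) \<and> I3 A (u - 1) S' \<and>
     allowed (rllet A u S) (shape S') \<and> phop u (rllet A u S) S' = S \<and>
     stepsh (rllet A u S) (shape S') = shape S \<and> \<not> isD (rllet A u S)"
proof -
  have nx: "\<not> (\<exists>x. (x,u) \<in> A)"
  proof
    assume "\<exists>x. (x,u) \<in> A"
    then obtain x where x: "(x,u) \<in> A" by blast
    then show False using vd2[OF vd x uj] dg[OF x] by simp
  qed
  have ex: "\<exists>j. (u,j) \<in> A" using uj by blast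
  have ul: "u < j" using dg[OF uj] by simp
  have uE: "u \<in> els S" using E uj ul unfolding present_def by auto
  have le: "\<forall>z\<in>els S. z \<le> u" using E unfolding present_def by auto
  have pres: "present A (u - 1) = present A u - {u}"
  proof (intro set_eqI iffI)
    fix y assume "y \<in> present A (u - 1)"
    then obtain j' where j': "(y,j') \<in> A" "y \<le> u - 1" "u - 1 < j'" unfolding present_def by auto
    have "j' \<noteq> u" using nx j' by auto
    then show "y \<in> present A u - {u}" using j' u unfolding present_def by auto
  next
    fix y assume "y \<in> present A u - {u}"
    then show "y \<in> present A (u - 1)" unfolding present_def by auto
  qed
  have I3': "\<And>S'. fst S' \<subseteq> fst S \<Longrightarrow> snd S' \<subseteq> snd S \<Longrightarrow> I3 A (u - 1) S'"
  proof -
    fix S' :: tb assume s1: "fst S' \<subseteq> fst S" and s2: "snd S' \<subseteq> snd S"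
    show "I3 A (u - 1) S'" unfolding I3_def
    proof
      fix y2 assume "y2 \<in> snd S'"
      then have "y2 \<in> snd S" using s2 by auto
      then obtain j2 b jb where W: "(y2,j2) \<in> A" "(b,jb) \<in> A" "u < jb" "jb < j2" "b < y2"
        "\<forall>y\<in>fst S. y < y2 \<longrightarrow> y \<le> b" using I unfolding I3_def by fastforce
      show "\<exists>j2 b jb. (y2,j2) \<in> A \<and> (b,jb) \<in> A \<and> u - 1 < jb \<and> jb < j2 \<and> b < y2 \<and>
          (\<forall>y\<in>fst S'. y < y2 \<longrightarrow> y \<le> b)" using W s1 by (intro exI[of _ j2] exI[of _ b] exI[of _ jb]) auto
    qed
  qed
  show ?thesis
  proof (cases "u \<in> fst S")
    case True
    define S' where "S' = (fst S - {u}, snd S)"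
    note D = del_U1[OF ok True le S'_def]
    have rl: "rlop A u S = Some S'" unfolding rlop_def using nx ex True S'_def by simp
    have lt: "rllet A u S = U1" unfolding rllet_def using nx ex True by simp
    show ?thesis
    proof (intro exI[of _ S'] conjI)
      show "rlop A u S = Some S'" by (rule rl)
      show "tab_ok S'" by (rule D(1))
      show "els S' = present A (u - 1)" using D(2) pres E by simp
      show "I3 A (u - 1) S'" by (rule I3') (simp_all add: S'_def)
      show "allowed (rllet A u S) (shape S')" using D(3) lt by simp
      show "phop u (rllet A u S) S' = S" using D(4) lt by simp
      show "stepsh (rllet A u S) (shape S') = shape S" using D(5) lt by simp
      show "\<not> isD (rllet A u S)" using lt by (simp add: isD_def)
    qed
  next
    case False
    then have T2: "u \<in> snd S" using uE unfolding els_def by auto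
    define S' where "S' = (fst S, snd S - {u})"
    note D = del_U2[OF ok T2 le S'_def]
    have rl: "rlop A u S = Some S'" unfolding rlop_def using nx ex False S'_def by simp
    have lt: "rllet A u S = U2" unfolding rllet_def using nx ex False by simp
    show ?thesis
    proof (intro exI[of _ S'] conjI)
      show "rlop A u S = Some S'" by (rule rl)
      show "tab_ok S'" by (rule D(1))
      show "els S' = present A (u - 1)" using D(2) pres E by simp
      show "I3 A (u - 1) S'" by (rule I3') (simp_all add: S'_def)
      show "allowed (rllet A u S) (shape S')" using D(3) lt by simp
      show "phop u (rllet A u S) S' = S" using D(4) lt by simp
      show "stepsh (rllet A u S) (shape S') = shape S" using D(5) lt by simp
      show "\<not> isD (rllet A u S)" using lt by (simp add: isD_def)
    qed
  qed
qed

lemma step_iso: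
  assumes u: "1 \<le> u" "u \<le> n" and ok: "tab_ok S" and E: "els S = present A u" and I: "I3 A u S"
    and nx: "\<not> (\<exists>x. (x,u) \<in> A)" and nj: "\<not> (\<exists>j. (u,j) \<in> A)"
  shows "rlop A u S = Some S \<and> els S = present A (u - 1) \<and> I3 A (u - 1) S \<and>
     rllet A u S = Stay"
proof -
  have pres: "present A (u - 1) = present A u"
  proof (intro set_eqI iffI)
    fix y assume "y \<in> present A (u - 1)"
    then obtain j' where j': "(y,j') \<in> A" "y \<le> u - 1" "u - 1 < j'" unfolding present_def by auto
    have "j' \<noteq> u" using nx j' by auto
    then show "y \<in> present A u" using j' u unfolding present_def by auto
  next
    fix y assume "y \<in> present A u"
    then obtain j' where j': "(y,j') \<in> A" "y \<le> u" "u < j'" unfolding present_def by auto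
    have "y \<noteq> u" using nj j' by auto
    then show "y \<in> present A (u - 1)" using j' unfolding present_def by auto
  qed
  have "I3 A (u - 1) S" using I unfolding I3_def by (meson less_imp_diff_less)
  then show ?thesis using pres E nx nj unfolding rlop_def rllet_def by simp
qed

lemma step_any:
  assumes u: "1 \<le> u" "u \<le> n" and ok: "tab_ok S" and E: "els S = present A u" and I: "I3 A u S"
    and nc: "nocross A"
  shows "\<exists>S'. rlop A u S = Some S' \<and> tab_ok S' \<and> els S' = present A (u - 1) \<and> I3 A (u - 1) S' \<and>
     allowed (rllet A u S) (shape S') \<and> phop u (rllet A u S) S' = S \<and>
     stepsh (rllet A u S) (shape S') = shape S \<and>
     (\<forall>x. (x,u) \<in> A \<longrightarrow> isD (rllet A u S) \<and> ejct (rllet A u S) S' = x) \<and>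
     ((\<not> (\<exists>x. (x,u) \<in> A)) \<longrightarrow> \<not> isD (rllet A u S))"
proof (cases "\<exists>x. (x,u) \<in> A")
  case True
  then obtain x where xu: "(x,u) \<in> A" by blast
  obtain S' where S': "rlop A u S = Some S'" "tab_ok S'" "els S' = present A (u - 1)" "I3 A (u - 1) S'"
     "allowed (rllet A u S) (shape S')" "phop u (rllet A u S) S' = S"
     "stepsh (rllet A u S) (shape S') = shape S" "isD (rllet A u S)" "ejct (rllet A u S) S' = x"
    using step_right[OF u ok E I xu nc] by blast
  have "\<forall>x'. (x',u) \<in> A \<longrightarrow> isD (rllet A u S) \<and> ejct (rllet A u S) S' = x'"
    using S'(8,9) vd1[OF vd xu] by auto
  then show ?thesis using S' True by (intro exI[of _ S']) auto
next
  case False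
  note nx = False
  show ?thesis
  proof (cases "\<exists>j. (u,j) \<in> A")
    case True
    then obtain j where uj: "(u,j) \<in> A" by blast
    show ?thesis using step_left[OF u ok E I uj] nx by blast
  next
    case False
    have "rlop A u S = Some S \<and> els S = present A (u - 1) \<and> I3 A (u - 1) S \<and> rllet A u S = Stay"
      by (rule step_iso[OF u ok E I nx False])
    then show ?thesis using ok nx by (intro exI[of _ S]) (auto simp: isD_def)
  qed
qed

lemma rl_inv:
  assumes nc: "nocross A" and t: "t \<le> n"
  shows "\<exists>S. cst A n t = Some S \<and> tab_ok S \<and> els S = present A t \<and> I3 A t S"
proof -
  have "\<forall>t. n - t = d \<longrightarrow> t \<le> n \<longrightarrow> (\<exists>S. cst A n t = Some S \<and> tab_ok S \<and> els S = present A t \<and> I3 A t S)" for d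
  proof (induction d)
    case 0
    show ?case
    proof (intro allI impI)
      fix t assume "n - t = 0" "t \<le> n"
      then have tn: "t = n" by simp
      have "present A n = {}" unfolding present_def using dg by fastforce
      then show "\<exists>S. cst A n t = Some S \<and> tab_ok S \<and> els S = present A t \<and> I3 A t S"
        using tn cst_top unfolding tab_ok_def els_def I3_def by auto
    qed
  next
    case (Suc d)
    show ?case
    proof (intro allI impI)
      fix t assume d: "n - t = Suc d" and "t \<le> n"
      then have tl: "t < n" by simp
      have nd: "n - Suc t = d" using d by simp
      have "\<exists>S. cst A n (Suc t) = Some S \<and> tab_ok S \<and> els S = present A (Suc t) \<and> I3 A (Suc t) S"
        using Suc.IH[rule_format, OF nd] tl by simp
      then obtain S where S: "cst A n (Suc t) = Some S" "tab_ok S" "els S = present A (Suc t)" "I3 A (Suc t) S"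
        by blast
      obtain S' where S': "rlop A (Suc t) S = Some S'" "tab_ok S'" "els S' = present A t" "I3 A t S'"
        using step_any[of "Suc t" S, OF _ _ S(2,3,4) nc] tl by auto
      show "\<exists>S. cst A n t = Some S \<and> tab_ok S \<and> els S = present A t \<and> I3 A t S"
        using cst_step[OF tl] S(1) S' by auto
    qed
  qed
  then show ?thesis using t by simp
qed

end


context arcs
begin

definition T :: "nat \<Rightarrow> tb" where "T t = the (cst A n t)"

lemma T_props:
  assumes nc: "nocross A" and t: "t \<le> n"
  shows "cst A n t = Some (T t)" "tab_ok (T t)" "els (T t) = present A t" "I3 A t (T t)"
proof -
  obtain S where S: "cst A n t = Some S" "tab_ok S" "els S = present A t" "I3 A t S"
    using rl_inv[OF nc t] by blast
  have e: "T t = S" unfolding T_def using S(1) by simp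
  show "cst A n t = Some (T t)" "tab_ok (T t)" "els (T t) = present A t" "I3 A t (T t)"
    unfolding e using S by simp_all
qed

lemma T_step:
  assumes nc: "nocross A" and t: "t < n"
  shows "allowed (rllet A (Suc t) (T (Suc t))) (shape (T t))"
    "phop (Suc t) (rllet A (Suc t) (T (Suc t))) (T t) = T (Suc t)"
    "stepsh (rllet A (Suc t) (T (Suc t))) (shape (T t)) = shape (T (Suc t))"
    "\<And>x. (x, Suc t) \<in> A \<Longrightarrow> isD (rllet A (Suc t) (T (Suc t))) \<and> ejct (rllet A (Suc t) (T (Suc t))) (T t) = x"
    "\<not> (\<exists>x. (x, Suc t) \<in> A) \<Longrightarrow> \<not> isD (rllet A (Suc t) (T (Suc t)))"
proof -
  have P: "cst A n (Suc t) = Some (T (Suc t))" "tab_ok (T (Suc t))" "els (T (Suc t)) = present A (Suc t)"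
    "I3 A (Suc t) (T (Suc t))" using T_props[OF nc, of "Suc t"] t by auto
  obtain S' where S': "rlop A (Suc t) (T (Suc t)) = Some S'"
     "allowed (rllet A (Suc t) (T (Suc t))) (shape S')" "phop (Suc t) (rllet A (Suc t) (T (Suc t))) S' = T (Suc t)"
     "stepsh (rllet A (Suc t) (T (Suc t))) (shape S') = shape (T (Suc t))"
     "\<forall>x. (x, Suc t) \<in> A \<longrightarrow> isD (rllet A (Suc t) (T (Suc t))) \<and> ejct (rllet A (Suc t) (T (Suc t))) S' = x"
     "(\<not> (\<exists>x. (x, Suc t) \<in> A)) \<longrightarrow> \<not> isD (rllet A (Suc t) (T (Suc t)))"
    using step_any[of "Suc t" "T (Suc t)", OF _ _ P(2,3,4) nc] t by auto
  have "cst A n t = Some S'" using cst_step[OF t] P(1) S'(1) by simp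
  then have e: "S' = T t" unfolding T_def by simp
  show "allowed (rllet A (Suc t) (T (Suc t))) (shape (T t))"
    "phop (Suc t) (rllet A (Suc t) (T (Suc t))) (T t) = T (Suc t)"
    "stepsh (rllet A (Suc t) (T (Suc t))) (shape (T t)) = shape (T (Suc t))"
    "\<And>x. (x, Suc t) \<in> A \<Longrightarrow> isD (rllet A (Suc t) (T (Suc t))) \<and> ejct (rllet A (Suc t) (T (Suc t))) (T t) = x"
    "\<not> (\<exists>x. (x, Suc t) \<in> A) \<Longrightarrow> \<not> isD (rllet A (Suc t) (T (Suc t)))"
    using S' e by auto
qed

lemma T0: assumes nc: "nocross A" shows "T 0 = ({}, {})"
proof -
  have "els (T 0) = present A 0" using T_props[OF nc] by simp
  also have "present A 0 = {}" unfolding present_def using dg by fastforce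
  finally show ?thesis unfolding els_def by (metis Un_empty prod.collapse)
qed

lemma Tn: "T n = ({}, {})" unfolding T_def using cst_top by simp

lemma Psi_nth: "t < n \<Longrightarrow> Psi A n ! t = rllet A (Suc t) (T (Suc t))"
  using nth_Psi unfolding T_def by simp

lemma phst_Psi:
  assumes nc: "nocross A" and t: "t \<le> n"
  shows "phst (Psi A n) t = T t"
  using t
proof (induction t)
  case 0 then show ?case using T0[OF nc] by simp
next
  case (Suc t)
  then have tl: "t < n" by simp
  have "phst (Psi A n) (Suc t) = phop (Suc t) (Psi A n ! t) (T t)" using Suc by simp
  also have "\<dots> = T (Suc t)" using T_step(2)[OF nc tl] Psi_nth[OF tl] by simp
  finally show ?case .
qed

lemma shl_Psi:
  assumes nc: "nocross A" and t: "t \<le> n"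
  shows "shl (0,0) (take t (Psi A n)) = shape (T t)"
  using t
proof (induction t)
  case 0 then show ?case using T0[OF nc] unfolding shape_def by simp
next
  case (Suc t)
  then have tl: "t < n" by simp
  have "shl (0,0) (take (Suc t) (Psi A n)) = stepsh (Psi A n ! t) (shl (0,0) (take t (Psi A n)))"
    using shl_take_Suc[of t "Psi A n" "(0,0)"] tl length_Psi[of A n] by simp
  also have "\<dots> = shape (T (Suc t))" using Suc T_step(3)[OF nc tl] Psi_nth[OF tl] by simp
  finally show ?case .
qed

lemma wv_Psi:
  assumes nc: "nocross A"
  shows "wv (0,0) (Psi A n)"
  unfolding wv_iff
proof (intro conjI allI impI)
  fix k assume "k < length (Psi A n)"
  then have k: "k < n" by (simp add: length_Psi)
  show "allowed (Psi A n ! k) (shl (0,0) (take k (Psi A n)))"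
    using shl_Psi[OF nc, of k] k T_step(1)[OF nc k] Psi_nth[OF k] by simp
next
  have "shl (0,0) (Psi A n) = shl (0,0) (take n (Psi A n))" by (simp add: length_Psi)
  also have "\<dots> = shape (T n)" using shl_Psi[OF nc, of n] by simp
  also have "\<dots> = (0,0)" using Tn unfolding shape_def by simp
  finally show "shl (0,0) (Psi A n) = (0,0)" .
qed

lemma phA_Psi:
  assumes nc: "nocross A"
  shows "phA (Psi A n) = A"
proof (intro set_eqI iffI)
  fix p assume "p \<in> phA (Psi A n)"
  then obtain t where t: "p = (ej (Psi A n) t, t)" "1 \<le> t" "t \<le> n" "isD (Psi A n ! (t - 1))"
    unfolding phA_def length_Psi by auto
  obtain t' where t': "t = Suc t'" using t(2) by (cases t) auto
  have tl: "t' < n" using t t' by simp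
  have ej: "ej (Psi A n) t = ejct (rllet A t (T t)) (T t')"
    unfolding ej_def t' using phst_Psi[OF nc, of t'] tl Psi_nth[OF tl] by simp
  have "isD (rllet A t (T t))" using t(4) Psi_nth[OF tl] t' by simp
  then have "\<exists>x. (x, t) \<in> A" using T_step(5)[OF nc tl] t' by blast
  then obtain x where x: "(x, t) \<in> A" by blast
  then have "ejct (rllet A t (T t)) (T t') = x" using T_step(4)[OF nc tl] t' by simp
  then show "p \<in> A" using t(1) ej x by simp
next
  fix p assume p: "p \<in> A"
  obtain x t where xt: "p = (x, t)" by fastforce
  have d: "1 \<le> x" "x < t" "t \<le> n" using dg p xt by auto
  obtain t' where t': "t = Suc t'" using d by (cases t) auto
  have tl: "t' < n" using d t' by simp
  have D: "isD (rllet A t (T t))" "ejct (rllet A t (T t)) (T t') = x"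
    using T_step(4)[OF nc tl, of x] p xt t' by auto
  have "ej (Psi A n) t = x"
    unfolding ej_def t' using phst_Psi[OF nc, of t'] tl Psi_nth[OF tl] D t' by simp
  moreover have "isD (Psi A n ! (t - 1))" using D Psi_nth[OF tl] t' by simp
  ultimately show "p \<in> phA (Psi A n)" unfolding phA_def length_Psi using xt d by auto
qed

end


lemma inso_fail:
  assumes ins: "inso x S = Some S'" and p: "p \<in> fst S" and q: "q \<in> snd S" and xp: "x < p"
    and pq: "p < q" and fin: "finite (fst S)"
  shows False
proof -
  have nall: "\<not> (\<forall>z\<in>fst S. z < x)" using p xp less_asym by blast
  define y where "y = Min {z\<in>fst S. x < z}"
  have ne: "{z\<in>fst S. x < z} \<noteq> {}" using p xp by auto
  have "y \<le> p" unfolding y_def using fin p xp by (intro Min_le) auto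
  then have "\<not> q < y" using pq by simp
  then have "\<not> (\<forall>z\<in>snd S. z < y)" using q by blast
  then have c1: "(\<forall>z\<in>snd S. z < y) = False" by simp
  have c2: "(\<forall>z\<in>fst S. z < x) = False" using nall by simp
  have "inso x S = None" unfolding inso_def y_def[symmetric] Let_def c1 c2 by simp
  then show False using ins by simp
qed

lemma inso_keep:
  assumes ins: "inso x S = Some S'" and p: "p \<in> fst S" and q: "q \<in> snd S" and xp: "p < x"
    and fin: "finite (fst S)" and xn: "x \<notin> fst S"
  shows "p \<in> fst S' \<and> q \<in> snd S'"
proof (cases "\<forall>z\<in>fst S. z < x")
  case True
  then show ?thesis using ins p q unfolding inso_def by auto
next
  case False
  define y where "y = Min {z\<in>fst S. x < z}"
  obtain z where z: "z \<in> fst S" "\<not> z < x" using False by blast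
  have "z \<noteq> x" using z xn by auto
  then have "x < z" using z by simp
  then have ne: "{z\<in>fst S. x < z} \<noteq> {}" using z by auto
  have "y \<in> {z\<in>fst S. x < z}" unfolding y_def using fin ne by (intro Min_in) auto
  then have yp: "y \<noteq> p" using xp by auto
  show ?thesis
  proof (cases "\<forall>z\<in>snd S. z < y")
    case True
    then have "S' = (insert x (fst S - {y}), insert y (snd S))"
      using ins False unfolding inso_def y_def[symmetric] by (simp add: Let_def)
    then show ?thesis using p q yp by auto
  next
    case c: False
    have c1: "(\<forall>z\<in>snd S. z < y) = False" using c by simp
    have c2: "(\<forall>z\<in>fst S. z < x) = False" using False by simp
    have "inso x S = None" unfolding inso_def y_def[symmetric] Let_def c1 c2 by simp
    then show ?thesis using ins by simp
  qed
qed

lemma nocross_of_run: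
  fixes A :: "(nat \<times> nat) set" and n :: nat and St :: "nat \<Rightarrow> tb"
  assumes dg: "\<And>i j. (i,j) \<in> A \<Longrightarrow> 1 \<le> i \<and> i < j \<and> j \<le> n"
    and vd: "vdisj A"
    and run: "\<And>t. t < n \<Longrightarrow> rlop A (Suc t) (St (Suc t)) = Some (St t)"
    and ok: "\<And>t. t \<le> n \<Longrightarrow> tab_ok (St t)"
    and pr: "\<And>t. t \<le> n \<Longrightarrow> els (St t) = present A t"
  shows "nocross A"
proof (rule ccontr)
  assume "\<not> nocross A"
  then obtain i1 j1 i2 j2 i3 j3 where C: "(i1,j1)\<in>A" "(i2,j2)\<in>A" "(i3,j3)\<in>A"
    "i1 < i2" "i2 < i3" "i3 < j1" "j1 < j2" "j2 < j3" unfolding nocross_def by blast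
  have j3n: "j3 \<le> n" using dg[OF C(3)] by simp
  have THEx: "\<And>x u. (x,u) \<in> A \<Longrightarrow> (THE x. (x,u) \<in> A) = x"
  proof -
    fix x u assume xu: "(x,u) \<in> A"
    show "(THE x. (x,u) \<in> A) = x"
    proof (rule the_equality)
      show "(x,u) \<in> A" by (rule xu)
      fix y assume "(y,u) \<in> A" then show "y = x" using vd1[OF vd xu, of y] by simp
    qed
  qed
  have ins: "\<And>x u. (x,u) \<in> A \<Longrightarrow> u \<le> n \<Longrightarrow> inso x (St u) = Some (St (u - 1))"
  proof -
    fix x u assume xu: "(x,u) \<in> A" and un: "u \<le> n"
    have u1: "1 \<le> u" using dg[OF xu] by simp
    then obtain t where t: "u = Suc t" by (cases u) auto
    have ex: "\<exists>x. (x,u) \<in> A" using xu by blast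
    have "rlop A u (St u) = inso x (St u)" unfolding rlop_def using ex THEx[OF xu] by simp
    then show "inso x (St u) = Some (St (u - 1))" using run[of t] t un by simp
  qed
  define J where "J t \<longleftrightarrow> (\<exists>p\<in>fst (St t). \<exists>q\<in>snd (St t). i1 < p \<and> p < q \<and> q \<le> i3)" for t
  have fin: "\<And>t. t \<le> n \<Longrightarrow> finite (fst (St t))" using ok unfolding tab_ok_def by auto
  have JB: "J (j2 - 1)"
  proof -
    have i3p: "i3 \<in> els (St j2)" using pr[of j2] C j3n unfolding present_def by auto
    have I2: "inso i2 (St j2) = Some (St (j2 - 1))" using ins[OF C(2)] C j3n by simp
    have j2n: "j2 \<le> n" using C j3n by simp
    show ?thesis
    proof (cases "\<forall>z\<in>fst (St j2). z < i2")
      case True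
      then have i3R2: "i3 \<in> snd (St j2)" using i3p C unfolding els_def by auto
      have "St (j2 - 1) = (insert i2 (fst (St j2)), snd (St j2))" using I2 True unfolding inso_def by simp
      then show ?thesis unfolding J_def using i3R2 C by (intro bexI[of _ i2] bexI[of _ i3]) auto
    next
      case False
      define y where "y = Min {z\<in>fst (St j2). i2 < z}"
      have ne: "{z\<in>fst (St j2). i2 < z} \<noteq> {}"
      proof
        assume e: "{z\<in>fst (St j2). i2 < z} = {}"
        obtain z where z: "z \<in> fst (St j2)" "\<not> z < i2" using False by auto
        have "z \<noteq> i2"
        proof
          assume "z = i2"
          then have "i2 \<in> present A j2" using z pr[OF j2n] unfolding els_def by auto
          then obtain j where "(i2,j) \<in> A" "j2 < j" unfolding present_def by auto
          then show False using vd3[OF vd C(2)] by fastforce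
        qed
        then show False using e z by auto
      qed
      have "y \<in> {z\<in>fst (St j2). i2 < z}" unfolding y_def using fin[OF j2n] ne by (intro Min_in) auto
      then have yin: "y \<in> fst (St j2)" "i2 < y" by auto
      have ymin: "\<And>z. z \<in> fst (St j2) \<Longrightarrow> i2 < z \<Longrightarrow> y \<le> z" unfolding y_def using fin[OF j2n] by simp
      show ?thesis
      proof (cases "\<forall>z\<in>snd (St j2). z < y")
        case True
        then have S': "St (j2 - 1) = (insert i2 (fst (St j2) - {y}), insert y (snd (St j2)))"
          using I2 False unfolding inso_def y_def[symmetric] by (simp add: Let_def)
        show ?thesis
        proof (cases "i3 \<in> fst (St j2)")
          case True
          then have "y \<le> i3" using ymin C by simp
          then show ?thesis unfolding J_def S' using yin C by (intro bexI[of _ i2] bexI[of _ y]) auto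
        next
          case False
          then have "i3 \<in> snd (St j2)" using i3p unfolding els_def by auto
          then show ?thesis unfolding J_def S' using C by (intro bexI[of _ i2] bexI[of _ i3]) auto
        qed
      next
        case c2: False
        have c1: "(\<forall>z\<in>snd (St j2). z < y) = False" using c2 by simp
        have c3: "(\<forall>z\<in>fst (St j2). z < i2) = False" using False by simp
        have "inso i2 (St j2) = None" unfolding inso_def y_def[symmetric] Let_def c1 c3 by simp
        then show ?thesis using I2 by simp
      qed
    qed
  qed
  have JC: "\<And>d. d \<le> j2 - 1 - j1 \<Longrightarrow> J (j2 - 1 - d)"
  proof -
    fix d show "d \<le> j2 - 1 - j1 \<Longrightarrow> J (j2 - 1 - d)"
    proof (induction d)
      case 0 then show ?case using JB by simp
    next
      case (Suc d)
      define u where "u = j2 - 1 - d"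
      have uJ: "J u" using Suc unfolding u_def by simp
      have ub: "j1 < u" "u \<le> n" using Suc C j3n unfolding u_def by auto
      then obtain t where t: "u = Suc t" by (cases u) auto
      have eq: "j2 - 1 - Suc d = u - 1" unfolding u_def by simp
      obtain p q where pq: "p \<in> fst (St u)" "q \<in> snd (St u)" "i1 < p" "p < q" "q \<le> i3"
        using uJ unfolding J_def by blast
      have rl: "rlop A u (St u) = Some (St (u - 1))" using run[of t] t ub by simp
      have ui3: "i3 < u" using C ub by simp
      show ?case unfolding eq
      proof (cases "\<exists>x. (x,u) \<in> A")
        case True
        then obtain x where xu: "(x,u) \<in> A" by blast
        have I: "inso x (St u) = Some (St (u - 1))" using ins[OF xu ub(2)] .
        have xn: "x \<notin> fst (St u)"
        proof
          assume "x \<in> fst (St u)"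
          then have "x \<in> present A u" using pr[OF ub(2)] unfolding els_def by auto
          then obtain j where "(x,j) \<in> A" "u < j" unfolding present_def by auto
          then show False using vd3[OF vd xu] by fastforce
        qed
        have xnp: "x \<noteq> p" using xn pq by auto
        show "J (u - 1)"
        proof (cases "x < p")
          case True
          then show ?thesis using inso_fail[OF I pq(1,2) True pq(4) fin[OF ub(2)]] by simp
        next
          case False
          then have "p < x" using xnp by simp
          then have "p \<in> fst (St (u - 1)) \<and> q \<in> snd (St (u - 1))"
            using inso_keep[OF I pq(1,2) _ fin[OF ub(2)] xn] by simp
          then show ?thesis unfolding J_def using pq by blast
        qed
      next
        case False
        then have "St (u - 1) = (if \<exists>j. (u,j) \<in> A then (if u \<in> fst (St u) then (fst (St u) - {u}, snd (St u))
              else (fst (St u), snd (St u) - {u})) else St u)"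
          using rl unfolding rlop_def by (auto split: if_splits)
        moreover have "p \<noteq> u" "q \<noteq> u" using pq ui3 by auto
        ultimately have "p \<in> fst (St (u - 1)) \<and> q \<in> snd (St (u - 1))" using pq by (auto split: if_splits)
        then show "J (u - 1)" unfolding J_def using pq by blast
      qed
    qed
  qed
  have "J j1" using JC[of "j2 - 1 - j1"] C by simp
  then obtain p q where pq: "p \<in> fst (St j1)" "q \<in> snd (St j1)" "i1 < p" "p < q" "q \<le> i3"
    unfolding J_def by blast
  have j1n: "j1 \<le> n" using C j3n by simp
  have I: "inso i1 (St j1) = Some (St (j1 - 1))" using ins[OF C(1) j1n] .
  show False using inso_fail[OF I pq(1,2,3,4) fin[OF j1n]] .
qed


fun noUD :: "bool \<Rightarrow> stp list \<Rightarrow> bool" where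
  "noUD f [] = True"
| "noUD f (x # w) = (\<not> (f \<and> x = D1) \<and> noUD (x = U1) w)"

lemma UNIV_stp: "(UNIV :: stp set) = {Stay, U1, U2, D1, D2}"
  by (auto intro: stp.exhaust)

lemma finite_stp: "finite (UNIV :: stp set)" unfolding UNIV_stp by simp

lemma finite_len: "finite {w :: stp list. length w = n \<and> P w}"
proof -
  have "{w :: stp list. length w = n \<and> P w} \<subseteq> {w. set w \<subseteq> UNIV \<and> length w = n}" by auto
  moreover have "finite {w :: stp list. set w \<subseteq> UNIV \<and> length w = n}"
    by (rule finite_lists_length_eq[OF finite_stp])
  ultimately show ?thesis by (rule finite_subset)
qed

lemma card_split:
  "card {w::stp list. length w = Suc n \<and> P w} =
     card {w. length w = n \<and> P (Stay#w)} + card {w. length w = n \<and> P (U1#w)}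
   + card {w. length w = n \<and> P (U2#w)} + card {w. length w = n \<and> P (D1#w)}
   + card {w. length w = n \<and> P (D2#w)}"
proof -
  define S where "S x = (Cons x) ` {w. length w = n \<and> P (x#w)}" for x
  have cS: "card (S x) = card {w. length w = n \<and> P (x#w)}" for x
    unfolding S_def by (rule card_image) (simp add: inj_on_def)
  have fS: "finite (S x)" for x unfolding S_def using finite_len by simp
  have eq: "{w::stp list. length w = Suc n \<and> P w} = S Stay \<union> S U1 \<union> S U2 \<union> S D1 \<union> S D2"
  proof (intro set_eqI iffI)
    fix w assume "w \<in> {w::stp list. length w = Suc n \<and> P w}"
    then obtain x v where w: "w = x # v" "length v = n" "P (x # v)" by (cases w) auto
    show "w \<in> S Stay \<union> S U1 \<union> S U2 \<union> S D1 \<union> S D2" using w unfolding S_def by (cases x) auto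
  next
    fix w assume "w \<in> S Stay \<union> S U1 \<union> S U2 \<union> S D1 \<union> S D2"
    then show "w \<in> {w::stp list. length w = Suc n \<and> P w}" unfolding S_def by auto
  qed
  have d: "\<And>x y. x \<noteq> y \<Longrightarrow> S x \<inter> S y = {}" unfolding S_def by auto
  show ?thesis unfolding eq cS[symmetric]
    by (subst card_Un_disjoint, use fS d in auto)+
qed

lemma card_words:
  "card {w. length w = n \<and> wv (a,b) w \<and> count_list w Stay = l \<and> noUD f w} = Rf a b l f n"
proof (induction n arbitrary: a b l f)
  case 0
  have "{w::stp list. length w = 0 \<and> wv (a,b) w \<and> count_list w Stay = l \<and> noUD f w}
     = (if a = 0 \<and> b = 0 \<and> l = 0 then {[]} else {})" by auto
  then show ?case by simp
next
  case (Suc n)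
  have s1: "card {w. length w = n \<and> wv (a,b) (Stay#w) \<and> count_list (Stay#w) Stay = l \<and> noUD f (Stay#w)}
      = (if 0 < l then Rf a b (l - 1) False n else 0)"
  proof (cases "0 < l")
    case True
    have "{w. length w = n \<and> wv (a,b) (Stay#w) \<and> count_list (Stay#w) Stay = l \<and> noUD f (Stay#w)}
        = {w. length w = n \<and> wv (a,b) w \<and> count_list w Stay = l - 1 \<and> noUD False w}" using True by auto
    then show ?thesis using Suc.IH True by simp
  next
    case False then show ?thesis by simp
  qed
  have s2: "card {w. length w = n \<and> wv (a,b) (U1#w) \<and> count_list (U1#w) Stay = l \<and> noUD f (U1#w)}
      = Rf (Suc a) b l True n" using Suc.IH by simp
  have s3: "card {w. length w = n \<and> wv (a,b) (U2#w) \<and> count_list (U2#w) Stay = l \<and> noUD f (U2#w)}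
      = (if b < a then Rf a (Suc b) l False n else 0)" using Suc.IH by (cases "b < a") simp_all
  have s4: "card {w. length w = n \<and> wv (a,b) (D1#w) \<and> count_list (D1#w) Stay = l \<and> noUD f (D1#w)}
      = (if b < a \<and> \<not> f then Rf (a - 1) b l False n else 0)" using Suc.IH by (cases "b < a \<and> \<not> f") auto
  have s5: "card {w. length w = n \<and> wv (a,b) (D2#w) \<and> count_list (D2#w) Stay = l \<and> noUD f (D2#w)}
      = (if 0 < b then Rf a (b - 1) l False n else 0)" using Suc.IH by (cases "0 < b") simp_all
  show ?case unfolding card_split[of n "\<lambda>w. wv (a,b) w \<and> count_list w Stay = l \<and> noUD f w"]
    using s1 s2 s3 s4 s5 by simp
qed


lemma noUD_iff: "noUD f w \<longleftrightarrow> \<not> (f \<and> w \<noteq> [] \<and> hd w = D1) \<and> (\<forall>i. Suc i < length w \<longrightarrow> \<not> (w!i = U1 \<and> w!Suc i = D1))"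
proof (induction w arbitrary: f)
  case Nil then show ?case by simp
next
  case (Cons x w)
  have "(\<forall>i. Suc i < length (x#w) \<longrightarrow> \<not> ((x#w)!i = U1 \<and> (x#w)!Suc i = D1)) \<longleftrightarrow>
        \<not> (x = U1 \<and> w \<noteq> [] \<and> hd w = D1) \<and> (\<forall>i. Suc i < length w \<longrightarrow> \<not> (w!i = U1 \<and> w!Suc i = D1))"
    (is "?L \<longleftrightarrow> ?R")
  proof
    assume L: ?L
    have "\<not> (x = U1 \<and> w \<noteq> [] \<and> hd w = D1)"
    proof
      assume c: "x = U1 \<and> w \<noteq> [] \<and> hd w = D1"
      then have "Suc 0 < length (x#w)" "(x#w)!0 = U1" "(x#w)!Suc 0 = D1" by (auto simp: hd_conv_nth)
      then show False using L by blast
    qed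
    moreover have "\<forall>i. Suc i < length w \<longrightarrow> \<not> (w!i = U1 \<and> w!Suc i = D1)"
    proof (intro allI impI)
      fix i assume "Suc i < length w"
      then show "\<not> (w!i = U1 \<and> w!Suc i = D1)" using L[rule_format, of "Suc i"] by simp
    qed
    ultimately show ?R by simp
  next
    assume R: ?R
    show ?L
    proof (intro allI impI)
      fix i assume i: "Suc i < length (x#w)"
      show "\<not> ((x#w)!i = U1 \<and> (x#w)!Suc i = D1)"
      proof (cases i)
        case 0 then show ?thesis using R i by (auto simp: hd_conv_nth)
      next
        case (Suc j) then show ?thesis using R i by simp
      qed
    qed
  qed
  then show ?case using Cons.IH[of "x = U1"] by auto
qed

context
  fixes w :: "stp list"
  assumes V: "wv (0,0) w"
begin

lemma phA_vdisj: "vdisj (phA w)"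
  unfolding vdisj_def
proof (intro allI ballI impI)
  fix v a b assume a: "a \<in> phA w" and b: "b \<in> phA w" and ab: "in_arc v a \<and> in_arc v b"
  obtain x t where at: "a = (x,t)" by fastforce
  obtain x' t' where bt: "b = (x',t')" by fastforce
  have A: "isD (w!(t-1))" "isU (w!(x-1))" "x = ej w t" using phA_mem[OF V] a at by auto
  have B: "isD (w!(t'-1))" "isU (w!(x'-1))" "x' = ej w t'" using phA_mem[OF V] b bt by auto
  consider "v = x" "v = x'" | "v = x" "v = t'" | "v = t" "v = x'" | "v = t" "v = t'"
    using ab at bt unfolding in_arc_def by auto
  then show "a = b"
  proof cases
    case 1 then show ?thesis using phA_inj[OF V] a b at bt by auto
  next
    case 2 then show ?thesis using A B UD_excl by metis
  next
    case 3 then show ?thesis using A B UD_excl by metis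
  next
    case 4 then show ?thesis using A B at bt by simp
  qed
qed

lemma phA_nocross: "nocross (phA w)"
proof (rule nocross_of_run[where n = "length w" and St = "phst w"])
  show "\<And>i j. (i,j) \<in> phA w \<Longrightarrow> 1 \<le> i \<and> i < j \<and> j \<le> length w" using phA_mem[OF V] by blast
  show "vdisj (phA w)" by (rule phA_vdisj)
  show "\<And>t. t < length w \<Longrightarrow> rlop (phA w) (Suc t) (phst w (Suc t)) = Some (phst w t)"
    using ph_rl_step(1)[OF V] by blast
  show "\<And>t. t \<le> length w \<Longrightarrow> tab_ok (phst w t)" using ph_inv[OF V] by blast
  show "\<And>t. t \<le> length w \<Longrightarrow> els (phst w t) = present (phA w) t"
    using phA_present[OF V] unfolding present_def by blast
qed

lemma ejct_D2_lt:
  assumes ok: "tab_ok S" and ne: "snd S \<noteq> {}"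
  shows "ejct D2 S < Max (snd S)"
proof -
  obtain R1 R2 where S: "S = (R1, R2)" by fastforce
  have fin: "finite R1" "finite R2" and cs: "\<forall>y\<in>R2. card {z\<in>R2. z \<le> y} \<le> card {z\<in>R1. z < y}"
    using ok S unfolding tab_ok_def by auto
  define y0 where "y0 = Max R2"
  have y0R: "y0 \<in> R2" using fin ne S unfolding y0_def by simp
  have "{z\<in>R2. z \<le> y0} = R2" using fin unfolding y0_def by auto
  then have "card R2 \<le> card {z\<in>R1. z < y0}" using cs y0R by metis
  moreover have "card R2 > 0" using ne fin S by auto
  ultimately have "card {z\<in>R1. z < y0} \<noteq> 0" by linarith
  then have neX: "{z\<in>R1. z < y0} \<noteq> {}" by (metis card.empty)
  have "Max {z\<in>R1. z < y0} \<in> {z\<in>R1. z < y0}" using fin neX by (intro Max_in) auto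
  then show ?thesis using S unfolding ejct_def y0_def by simp
qed

lemma phA_onearc:
  assumes i: "1 \<le> i" and m: "(i, Suc i) \<in> phA w"
  shows "w!(i-1) = U1 \<and> w!i = D1"
proof -
  have M: "Suc i \<le> length w" "isD (w!i)" "isU (w!(i-1))" "i = ej w (Suc i)" using phA_mem[OF V m] by auto
  have il: "i < length w" using M by simp
  define S1 where "S1 = phst w i"
  have I1: "tab_ok S1" "shape S1 = shl (0,0) (take i w)" "els S1 \<subseteq> {1..i}"
    using ph_inv[OF V, of i] il unfolding S1_def by auto
  have al: "allowed (w!i) (shape S1)" using V il I1(2) unfolding wv_iff by simp
  have ejS: "ejct (w!i) S1 = i" using M(4) unfolding ej_def S1_def by simp
  have iS1: "i \<in> fst S1" using ejS M(2) ph_D1(4)[OF I1(1)] ph_D2(4)[OF I1(1)] al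
    unfolding isD_def by auto
  obtain i' where i': "i = Suc i'" using i by (cases i) auto
  have il': "i' < length w" using il i' by simp
  define S0 where "S0 = phst w i'"
  have I0: "els S0 \<subseteq> {1..i'}" using ph_inv[OF V, of i'] il' unfolding S0_def by auto
  have P: "S1 = phop i (w!i') S0" unfolding S1_def S0_def i' by simp
  have dis1: "fst S1 \<inter> snd S1 = {}" using I1(1) unfolding tab_ok_def by auto
  have U1: "w!(i-1) = U1"
  proof (rule ccontr)
    assume "w!(i-1) \<noteq> U1"
    then have "w!i' = U2" using M(3) i' unfolding isU_def by auto
    then have "i \<in> snd S1" using P by simp
    then show False using iS1 dis1 by auto
  qed
  have D1: "w!i = D1"
  proof (rule ccontr)
    assume "w!i \<noteq> D1"
    then have D2: "w!i = D2" using M(2) unfolding isD_def by auto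
    have ne: "snd S1 \<noteq> {}" using al D2 unfolding shape_def by auto
    have lt: "ejct D2 S1 < Max (snd S1)" by (rule ejct_D2_lt[OF I1(1) ne])
    have fin: "finite (snd S1)" using I1(1) unfolding tab_ok_def by auto
    have "Max (snd S1) \<in> snd S1" using fin ne by simp
    then have "Max (snd S1) \<le> i" using I1(3) unfolding els_def by auto
    then show False using lt ejS D2 by simp
  qed
  show ?thesis using U1 D1 by simp
qed

lemma phA_onearc_conv:
  assumes i: "Suc i < length w" and a: "w!i = U1" and b: "w!Suc i = D1"
  shows "(Suc i, Suc (Suc i)) \<in> phA w"
proof -
  define S0 where "S0 = phst w i"
  have I0: "els S0 \<subseteq> {1..i}" using ph_inv[OF V, of i] i unfolding S0_def by auto
  have P: "phst w (Suc i) = (insert (Suc i) (fst S0), snd S0)" unfolding S0_def using a by simp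
  have fin: "finite (fst S0)" using ph_inv[OF V, of i] i unfolding S0_def tab_ok_def by auto
  have "\<forall>z\<in>fst S0. z \<le> Suc i" using I0 unfolding els_def by auto
  then have mx: "Max (insert (Suc i) (fst S0)) = Suc i" using fin by (intro Max_eqI) auto
  have "ej w (Suc (Suc i)) = Suc i" unfolding ej_def using P b mx by (simp add: ejct_def)
  moreover have "isD (w!(Suc (Suc i) - 1))" using b by (simp add: isD_def)
  ultimately show ?thesis unfolding phA_def using i by force
qed

lemma phA_iso: "isolated_vertices (length w) (phA w) = {v\<in>{1..length w}. w!(v-1) = Stay}"
proof (intro set_eqI iffI)
  fix v assume "v \<in> isolated_vertices (length w) (phA w)"
  then have v: "v \<in> {1..length w}" "\<not> (\<exists>a\<in>phA w. in_arc v a)" unfolding isolated_vertices_def by auto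
  have nU: "\<not> isU (w!(v-1))"
  proof
    assume "isU (w!(v-1))"
    then obtain t where "(v,t) \<in> phA w" using phA_partner[OF V, of v] v by auto
    then show False using v unfolding in_arc_def by force
  qed
  have nD: "\<not> isD (w!(v-1))"
  proof
    assume "isD (w!(v-1))"
    then have "(ej w v, v) \<in> phA w" unfolding phA_def using v by auto
    then show False using v unfolding in_arc_def by force
  qed
  show "v \<in> {v\<in>{1..length w}. w!(v-1) = Stay}" using v nU nD
    by (cases "w!(v-1)") (auto simp: isU_def isD_def)
next
  fix v assume v: "v \<in> {v\<in>{1..length w}. w!(v-1) = Stay}"
  have "\<not> (\<exists>a\<in>phA w. in_arc v a)"
  proof
    assume "\<exists>a\<in>phA w. in_arc v a"
    then obtain x t where xt: "(x,t) \<in> phA w" "v = x \<or> v = t" unfolding in_arc_def by auto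
    have "isU (w!(x-1))" "isD (w!(t-1))" using phA_mem[OF V xt(1)] by auto
    then show False using xt(2) v by (auto simp: isU_def isD_def)
  qed
  then show "v \<in> isolated_vertices (length w) (phA w)" using v unfolding isolated_vertices_def by auto
qed

end

lemma count_list_card: "count_list w x = card {i. i < length w \<and> w!i = x}"
proof -
  have "count_list w x = length (filter (\<lambda>y. y = x) w)" by (induction w) auto
  then show ?thesis by (simp add: length_filter_conv_card)
qed

lemma count_stay: "card {v\<in>{1..length w}. w!(v-1) = Stay} = count_list w Stay"
proof -
  have "{v\<in>{1..length w}. w!(v-1) = Stay} = Suc ` {i. i < length w \<and> w!i = Stay}"
  proof (intro set_eqI iffI)
    fix v assume "v \<in> {v\<in>{1..length w}. w!(v-1) = Stay}"
    then show "v \<in> Suc ` {i. i < length w \<and> w!i = Stay}"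
      by (intro image_eqI[of _ _ "v - 1"]) auto
  qed auto
  then show ?thesis unfolding count_list_card by (simp add: card_image)
qed


lemma S3_card: "S3 n l = card {w. length w = n \<and> wv (0,0) w \<and> count_list w Stay = l \<and> noUD False w}"
proof -
  define W where "W = {w. length w = n \<and> wv (0,0) w \<and> count_list w Stay = l \<and> noUD False w}"
  define R where "R = {A. rna3 n A \<and> card (isolated_vertices n A) = l}"
  have inj: "inj_on phA W"
  proof (rule inj_onI)
    fix w w' assume "w \<in> W" "w' \<in> W" "phA w = phA w'"
    then show "w = w'" using Psi_phA[of w] Psi_phA[of w'] unfolding W_def by auto
  qed
  have "R = phA ` W"
  proof (intro set_eqI iffI)
    fix A assume "A \<in> phA ` W"
    then obtain w where w: "w \<in> W" "A = phA w" by blast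
    have V: "wv (0,0) w" and len: "length w = n" and cnt: "count_list w Stay = l"
      and nu: "noUD False w" using w unfolding W_def by auto
    have dg: "digraph_on n A" unfolding digraph_on_def w(2) using phA_mem[OF V] len by auto
    have vd: "vdisj A" unfolding w(2) by (rule phA_vdisj[OF V])
    have nc: "nocross A" unfolding w(2) by (rule phA_nocross[OF V])
    have no1: "\<forall>i. (i, Suc i) \<notin> A"
    proof (intro allI notI)
      fix i assume m: "(i, Suc i) \<in> A"
      have i1: "1 \<le> i" using phA_mem(1)[OF V] m w(2) by auto
      have ud: "w!(i-1) = U1 \<and> w!i = D1" using phA_onearc[OF V i1] m w(2) by simp
      have s: "Suc (i - 1) = i" using i1 by simp
      have "Suc (i - 1) < length w" using phA_mem(3)[OF V] m w(2) i1 by fastforce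
      then have "\<not> (w!(i-1) = U1 \<and> w!Suc (i-1) = D1)" using nu unfolding noUD_iff by blast
      then show False using ud s by simp
    qed
    have "rna3 n A" unfolding rna3_def three_noncrossing_def using dg vd nc no1
      unfolding vdisj_def nocross_def by blast
    moreover have "card (isolated_vertices n A) = l"
      using phA_iso[OF V] count_stay[of w] cnt len w(2) by simp
    ultimately show "A \<in> R" unfolding R_def by simp
  next
    fix A assume "A \<in> R"
    then have r: "rna3 n A" and c: "card (isolated_vertices n A) = l" unfolding R_def by auto
    have dg: "\<And>i j. (i,j) \<in> A \<Longrightarrow> 1 \<le> i \<and> i < j \<and> j \<le> n"
      using r unfolding rna3_def three_noncrossing_def digraph_on_def by blast
    have vd: "vdisj A" using r unfolding rna3_def three_noncrossing_def vdisj_def by blast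
    have nc: "nocross A" using r unfolding rna3_def three_noncrossing_def nocross_def by blast
    have no1: "\<forall>i. (i, Suc i) \<notin> A" using r unfolding rna3_def by blast
    interpret arcs A n using dg vd by unfold_locales auto
    define w where "w = Psi A n"
    have V: "wv (0,0) w" unfolding w_def by (rule wv_Psi[OF nc])
    have len: "length w = n" unfolding w_def by (rule length_Psi)
    have pA: "phA w = A" unfolding w_def by (rule phA_Psi[OF nc])
    have cnt: "count_list w Stay = l" using phA_iso[OF V] count_stay[of w] c len pA by simp
    have nu: "noUD False w" unfolding noUD_iff
    proof (intro conjI allI impI notI)
      fix i assume "Suc i < length w" "w!i = U1 \<and> w!Suc i = D1"
      then have "(Suc i, Suc (Suc i)) \<in> phA w" using phA_onearc_conv[OF V] by blast
      then show False using pA no1 by simp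
    qed simp
    show "A \<in> phA ` W" unfolding W_def using V len cnt nu pA by (intro image_eqI[of _ _ w]) auto
  qed
  then have "card R = card W" using card_image[OF inj] by simp
  then show ?thesis unfolding S3_def R_def W_def .
qed

theorem corollary3p3:
  fixes n l :: nat
  assumes "l \<le> n"
  shows "int (S3 n l) =
    (\<Sum>b = 0..(n - l) div 2. (-1) ^ b * int ((n - b) choose b) * int ((n - 2*b) choose l) *
       (catalan_half (n - l - 2*b) * catalan_half (n - l - 2*b + 4)
        - (catalan_half (n - l - 2*b + 2))^2))"
proof -
  have "S3 n l = Rf 0 0 l False n" unfolding S3_card by (rule card_words)
  then show ?thesis using count_final[of l n] by simp
qed


end
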